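(* Let $n\ge2$, $m\ge2$ be integers, let $\mathcal{V}=\mathcal{V}_1\otimes\dots\otimes\mathcal{V}_m$ be a tensor product of vector spaces over a field $\mathbb{F}$, and let $\{x_a : a\in[n]\}$ be a multiset of product tensors with $x_a=x_{a,1}\otimes\dots\otimes x_{a,m}$. For $S\subseteq[n]$ and $j\in[m]$ let $d_j^S=\dim\operatorname{span}\{x_{a,j}:a\in S\}$. If for every subset $S \subseteq [n]$ with $2\leq |S| \leq n$ it holds that $|S| \leq\sum_{j=1}^m (d_j^S-1)$, then the set of product tensors lying in $\operatorname{span}\{x_a : a \in [n]\}$ equals $\mathbb{F}^\times x_1 \sqcup \dots \sqcup \mathbb{F}^\times x_n$ (i.e., every product tensor in this span is a non-zero scalar multiple of some $x_a$).
   Context: $[n]=\{1,\dots,n\}$. A product tensor is a non-zero tensor $z_1\otimes\dots\otimes z_m$, $z_j\in\mathcal{V}_j$. $\mathbb{F}^\times$ denotes the non-zero scalars. *)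

theory Defs
  imports "HOL-Analysis.Analysis" "HOL-Library.Function_Algebras"
begin

definition fscale :: "'f::field \<Rightarrow> ('a \<Rightarrow> 'f) \<Rightarrow> ('a \<Rightarrow> 'f)" where
  "fscale c v = (\<lambda>x. c * v x)"

lemma vector_space_fscale: "vector_space (fscale :: 'f::field \<Rightarrow> ('a \<Rightarrow> 'f) \<Rightarrow> _)"
  by unfold_locales (auto simp: fscale_def algebra_simps fun_eq_iff)

abbreviation fspan :: "('a \<Rightarrow> 'f::field) set \<Rightarrow> ('a \<Rightarrow> 'f) set" where
  "fspan \<equiv> module.span fscale"

abbreviation fdim :: "('a \<Rightarrow> 'f::field) set \<Rightarrow> nat" where
  "fdim \<equiv> vector_space.dim fscale"

text \<open>The product tensor \<open>z 1 \<otimes> \<dots> \<otimes> z m\<close> with factors \<open>z j :: 'i \<Rightarrow> 'f\<close>, realised as a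
  function on multi-indices \<open>\<iota> :: nat \<Rightarrow> 'i\<close> (only \<open>\<iota> 1, \<dots>, \<iota> m\<close> matter).\<close>
definition ptensor :: "nat \<Rightarrow> (nat \<Rightarrow> 'i \<Rightarrow> 'f::field) \<Rightarrow> ((nat \<Rightarrow> 'i) \<Rightarrow> 'f)" where
  "ptensor m z = (\<lambda>\<iota>. \<Prod>j\<in>{1..m}. z j (\<iota> j))"

definition is_product_tensor :: "nat \<Rightarrow> ((nat \<Rightarrow> 'i) \<Rightarrow> 'f::field) \<Rightarrow> bool" where
  "is_product_tensor m t \<longleftrightarrow> t \<noteq> 0 \<and> (\<exists>z. t = ptensor m z)"

end

theory Submission imports Defs begin

interpretation fs: vector_space "fscale :: 'f::field \<Rightarrow> ('a \<Rightarrow> 'f) \<Rightarrow> ('a \<Rightarrow> 'f)"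
  by (rule vector_space_fscale)

lemma fscale_apply: "fscale c v x = c * v x"
  by (simp add: fscale_def)

lemma fbasis:
  fixes S :: "('a \<Rightarrow> 'f::field) set"
  assumes "finite S"
  obtains B where "B \<subseteq> S" "fs.independent B" "S \<subseteq> fs.span B" "card B = fs.dim S" "finite B"
  using fs.basis_exists[of S] assms by (metis finite_subset)

lemma fdim_le_card:
  fixes S :: "('a \<Rightarrow> 'f::field) set"
  assumes "finite S" shows "fs.dim S \<le> card S"
  using fs.dim_le_card[OF fs.span_superset assms] .

lemma fdim_mono:
  fixes S T :: "('a \<Rightarrow> 'f::field) set"
  assumes "finite T" "S \<subseteq> fs.span T" shows "fs.dim S \<le> fs.dim T"
proof -
  obtain B where B: "B \<subseteq> T" "fs.independent B" "T \<subseteq> fs.span B" "card B = fs.dim T" "finite B"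
    using fbasis[OF assms(1)] by blast
  have "S \<subseteq> fs.span B"
    using assms(2) fs.span_mono[OF B(3)] fs.span_span[of B] by blast
  then show ?thesis using fs.dim_le_card[OF _ B(5)] B(4) by simp
qed

lemma fdim_subset:
  fixes S T :: "('a \<Rightarrow> 'f::field) set"
  assumes "finite T" "S \<subseteq> T" shows "fs.dim S \<le> fs.dim T"
  using fdim_mono[OF assms(1)] assms(2) fs.span_superset by blast

lemma fdim_span_eq:
  fixes S T :: "('a \<Rightarrow> 'f::field) set"
  assumes "fs.span S = fs.span T" shows "fs.dim S = fs.dim T"
  using fs.span_eq_dim[OF assms] .

lemma fdim_Un_le:
  fixes S T :: "('a \<Rightarrow> 'f::field) set"
  assumes "finite S" "finite T"
  shows "fs.dim (S \<union> T) \<le> fs.dim S + fs.dim T"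
proof -
  obtain B where B: "B \<subseteq> S" "fs.independent B" "S \<subseteq> fs.span B" "card B = fs.dim S" "finite B"
    using fbasis[OF assms(1)] by blast
  obtain C where C: "C \<subseteq> T" "fs.independent C" "T \<subseteq> fs.span C" "card C = fs.dim T" "finite C"
    using fbasis[OF assms(2)] by blast
  have "S \<union> T \<subseteq> fs.span (B \<union> C)"
    using B(3) C(3) fs.span_mono[of B "B \<union> C"] fs.span_mono[of C "B \<union> C"] by blast
  then have "fs.dim (S \<union> T) \<le> card (B \<union> C)"
    using fs.dim_le_card B(5) C(5) by blast
  also have "\<dots> \<le> card B + card C" by (rule card_Un_le)
  finally show ?thesis using B(4) C(4) by simp
qed

lemma fdim_insert_le:
  fixes S :: "('a \<Rightarrow> 'f::field) set"
  assumes "finite S" shows "fs.dim (insert x S) \<le> fs.dim S + 1"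
proof -
  have "fs.dim (insert x S) = fs.dim ({x} \<union> S)" by simp
  also have "\<dots> \<le> fs.dim {x} + fs.dim S" using fdim_Un_le[of "{x}" S] assms by simp
  also have "\<dots> \<le> fs.dim S + 1" using fdim_le_card[of "{x}"] by simp
  finally show ?thesis .
qed

lemma fdim_Un_card:
  fixes S D :: "('a \<Rightarrow> 'f::field) set"
  assumes "finite S" "finite D" shows "fs.dim (S \<union> D) \<le> fs.dim S + card D"
  using fdim_Un_le[OF assms] fdim_le_card[OF assms(2)] by simp

lemma fdim_Un_direct:
  fixes S T :: "('a \<Rightarrow> 'f::field) set"
  assumes "finite S" "finite T" "fs.span S \<inter> fs.span T = {0}"
  shows "fs.dim (S \<union> T) = fs.dim S + fs.dim T"
proof (rule antisym)
  show "fs.dim (S \<union> T) \<le> fs.dim S + fs.dim T" by (rule fdim_Un_le[OF assms(1,2)])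
  obtain B where B: "B \<subseteq> S" "fs.independent B" "S \<subseteq> fs.span B" "card B = fs.dim S" "finite B"
    using fbasis[OF assms(1)] by blast
  obtain C where C: "C \<subseteq> T" "fs.independent C" "T \<subseteq> fs.span C" "card C = fs.dim T" "finite C"
    using fbasis[OF assms(2)] by blast
  have BC: "B \<inter> C = {}"
  proof -
    { fix b assume "b \<in> B" "b \<in> C"
      then have "b \<in> fs.span S \<inter> fs.span T" using B(1) C(1) fs.span_superset by blast
      then have "b = 0" using assms(3) by blast
      then have False using \<open>b \<in> B\<close> B(2) fs.dependent_zero by blast }
    then show ?thesis by blast
  qed
  have ind: "fs.independent (B \<union> C)"
  proof
    assume "fs.dependent (B \<union> C)"
    then obtain u where u: "\<exists>v\<in>B \<union> C. u v \<noteq> 0" "(\<Sum>v\<in>B \<union> C. fscale (u v) v) = 0"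
      using fs.dependent_finite[of "B \<union> C"] B(5) C(5) by auto
    have "(\<Sum>v\<in>B \<union> C. fscale (u v) v) = (\<Sum>v\<in>B. fscale (u v) v) + (\<Sum>v\<in>C. fscale (u v) v)"
      by (rule sum.union_disjoint[OF B(5) C(5) BC])
    then have eq: "(\<Sum>v\<in>B. fscale (u v) v) = - (\<Sum>v\<in>C. fscale (u v) v)"
      using u(2) by (simp add: eq_neg_iff_add_eq_0)
    have "(\<Sum>v\<in>B. fscale (u v) v) \<in> fs.span S"
      using B(1) by (intro fs.span_sum fs.span_scale) (auto intro: fs.span_base)
    moreover have "(\<Sum>v\<in>B. fscale (u v) v) \<in> fs.span T"
      unfolding eq using C(1) by (intro fs.span_neg fs.span_sum fs.span_scale) (auto intro: fs.span_base)
    ultimately have z: "(\<Sum>v\<in>B. fscale (u v) v) = 0" using assms(3) by blast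
    then have z2: "(\<Sum>v\<in>C. fscale (u v) v) = 0" using eq by simp
    have "\<forall>v\<in>B. u v = 0" using fs.independentD[OF B(2) B(5) order_refl z] by blast
    moreover have "\<forall>v\<in>C. u v = 0" using fs.independentD[OF C(2) C(5) order_refl z2] by blast
    ultimately show False using u(1) by blast
  qed
  have sp: "fs.span (S \<union> T) = fs.span (B \<union> C)"
  proof -
    have "S \<union> T \<subseteq> fs.span (B \<union> C)"
      using B(3) C(3) fs.span_mono[of B "B \<union> C"] fs.span_mono[of C "B \<union> C"] by blast
    moreover have "B \<union> C \<subseteq> fs.span (S \<union> T)"
      using B(1) C(1) fs.span_superset by blast
    ultimately show ?thesis using fs.span_eq by blast
  qed
  have "fs.dim (S \<union> T) = card (B \<union> C)"
    using fdim_span_eq[OF sp] fs.dim_eq_card_independent[OF ind] by simp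
  also have "\<dots> = card B + card C" using card_Un_disjoint[OF B(5) C(5) BC] .
  finally show "fs.dim S + fs.dim T \<le> fs.dim (S \<union> T)" using B(4) C(4) by simp
qed

lemma fdim_Un_direct_conv:
  fixes S T :: "('a \<Rightarrow> 'f::field) set"
  assumes "finite S" "finite T" "fs.dim (S \<union> T) = fs.dim S + fs.dim T"
  shows "fs.span S \<inter> fs.span T = {0}"
proof (rule ccontr)
  assume "fs.span S \<inter> fs.span T \<noteq> {0}"
  then obtain v where v: "v \<noteq> 0" "v \<in> fs.span S" "v \<in> fs.span T"
    using fs.span_zero by blast
  obtain B where B: "B \<subseteq> S" "fs.independent B" "S \<subseteq> fs.span B" "card B = fs.dim S" "finite B"
    using fbasis[OF assms(1)] by blast
  have "{v} \<subseteq> fs.span T" "fs.independent {v}" using v by auto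
  then obtain C where C: "{v} \<subseteq> C" "C \<subseteq> fs.span T" "fs.independent C" "fs.span T \<subseteq> fs.span C"
    using fs.maximal_independent_subset_extend by metis
  have fC: "finite C" using fs.independent_span_bound[OF assms(2) C(3) C(2)] by blast
  have cC: "card C = fs.dim T"
    using fs.basis_card_eq_dim[OF C(2) C(4) C(3)] by simp
  have "v \<in> fs.span B" using v(2) fs.span_mono[OF B(3)] fs.span_span[of B] by blast
  have "C \<subseteq> fs.span (B \<union> (C - {v}))"
  proof
    fix c assume "c \<in> C"
    show "c \<in> fs.span (B \<union> (C - {v}))"
    proof (cases "c = v")
      case True then show ?thesis using \<open>v \<in> fs.span B\<close> fs.span_mono[of B "B \<union> (C - {v})"] by blast
    next
      case False then show ?thesis using \<open>c \<in> C\<close> by (auto intro: fs.span_base)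
    qed
  qed
  then have "fs.span C \<subseteq> fs.span (B \<union> (C - {v}))"
    using fs.span_mono fs.span_span by metis
  then have "S \<union> T \<subseteq> fs.span (B \<union> (C - {v}))"
    using B(3) C(4) fs.span_superset[of T] fs.span_mono[of B "B \<union> (C - {v})"] by blast
  then have "fs.dim (S \<union> T) \<le> card (B \<union> (C - {v}))"
    using fs.dim_le_card B(5) fC by blast
  also have "\<dots> \<le> card B + card (C - {v})" by (rule card_Un_le)
  also have "\<dots> = card B + card C - 1"
  proof -
    have "card C \<ge> 1" using C(1) fC by (metis One_nat_def Suc_leI card_gt_0_iff empty_not_insert subset_empty)
    then show ?thesis using C(1) fC by (simp add: card_Diff_singleton)
  qed
  finally have "fs.dim (S \<union> T) \<le> card B + card C - 1" .
  moreover have "card C \<ge> 1" using C(1) fC by (metis One_nat_def Suc_leI card_gt_0_iff empty_not_insert subset_empty)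
  ultimately show False using assms(3) B(4) cC by linarith
qed


lemma fsum_apply: "(\<Sum>a\<in>A. f a) x = (\<Sum>a\<in>A. f a x)"
  by (induction A rule: infinite_finite_induct) auto

lemma fsum_apply2: "sum f A x = (\<Sum>a\<in>A. f a x)"
  using fsum_apply[of f A x] by simp

definition outer :: "('c \<Rightarrow> 'f::field) \<Rightarrow> ('d \<Rightarrow> 'f) \<Rightarrow> ('c \<times> 'd \<Rightarrow> 'f)" where
  "outer u w = (\<lambda>(p, q). u p * w q)"

lemma outer_apply[simp]: "outer u w (p, q) = u p * w q"
  by (simp add: outer_def)

lemma outer_scale_left: "outer (fscale c u) w = fscale c (outer u w)"
  by (auto simp: fun_eq_iff outer_def fscale_apply)

lemma outer_scale_right: "outer u (fscale c w) = fscale c (outer u w)"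
  by (auto simp: fun_eq_iff outer_def fscale_apply)

lemma outer_sum_left: "outer (\<Sum>i\<in>I. g i) w = (\<Sum>i\<in>I. outer (g i) w)"
  by (auto simp: fun_eq_iff outer_def fsum_apply sum_distrib_right)

lemma outer_eq_0_iff: "outer u w = 0 \<longleftrightarrow> u = 0 \<or> w = 0"
proof
  assume h: "outer u w = 0"
  show "u = 0 \<or> w = 0"
  proof (rule ccontr)
    assume "\<not> (u = 0 \<or> w = 0)"
    then obtain p q where "u p \<noteq> 0" "w q \<noteq> 0" by (auto simp: fun_eq_iff)
    then have "outer u w (p, q) \<noteq> 0" by simp
    then show False using h by simp
  qed
qed (auto simp: fun_eq_iff outer_def)

lemma span_rep:
  fixes g :: "'e \<Rightarrow> ('a \<Rightarrow> 'f::field)"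
  assumes "finite A" "t \<in> fs.span (g ` A)"
  shows "\<exists>c. t = (\<Sum>a\<in>A. fscale (c a) (g a))"
  using assms
proof (induction A arbitrary: t rule: finite_induct)
  case empty
  then show ?case by simp
next
  case (insert a A)
  have "t \<in> fs.span (insert (g a) (g ` A))" using insert.prems by simp
  then obtain k where k: "t - fscale k (g a) \<in> fs.span (g ` A)"
    using fs.span_breakdown_eq by blast
  obtain c where c: "t - fscale k (g a) = (\<Sum>b\<in>A. fscale (c b) (g b))"
    using insert.IH[OF k] by blast
  define c' where "c' = c(a := k)"
  have "(\<Sum>b\<in>insert a A. fscale (c' b) (g b)) = fscale k (g a) + (\<Sum>b\<in>A. fscale (c' b) (g b))"
    using insert.hyps by (simp add: c'_def)
  also have "(\<Sum>b\<in>A. fscale (c' b) (g b)) = (\<Sum>b\<in>A. fscale (c b) (g b))"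
    using insert.hyps by (intro sum.cong) (auto simp: c'_def)
  finally show ?case using c by (metis add_diff_cancel_left' diff_add_cancel)
qed

lemma sum_in_span:
  fixes g :: "'e \<Rightarrow> ('a \<Rightarrow> 'f::field)"
  shows "(\<Sum>a\<in>A. fscale (c a) (g a)) \<in> fs.span (g ` A)"
  by (intro fs.span_sum fs.span_scale fs.span_base) auto

definition col :: "'d \<Rightarrow> ('c \<times> 'd \<Rightarrow> 'f) \<Rightarrow> ('c \<Rightarrow> 'f)" where
  "col q t = (\<lambda>p. t (p, q))"

definition row :: "'c \<Rightarrow> ('c \<times> 'd \<Rightarrow> 'f) \<Rightarrow> ('d \<Rightarrow> 'f)" where
  "row p t = (\<lambda>q. t (p, q))"

lemma col_in_span:
  fixes u :: "'e \<Rightarrow> ('c \<Rightarrow> 'f::field)" and w :: "'e \<Rightarrow> ('d \<Rightarrow> 'f)"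
  assumes "finite S" "t \<in> fs.span ((\<lambda>a. outer (u a) (w a)) ` S)"
  shows "col q t \<in> fs.span (u ` S)"
proof -
  obtain c where c: "t = (\<Sum>a\<in>S. fscale (c a) (outer (u a) (w a)))"
    using span_rep[OF assms] by blast
  have "col q t = (\<Sum>a\<in>S. fscale (c a * w a q) (u a))"
    unfolding c col_def by (auto simp: fun_eq_iff fsum_apply mult_ac fscale_apply)
  then show ?thesis using sum_in_span by metis
qed

lemma row_in_span:
  fixes u :: "'e \<Rightarrow> ('c \<Rightarrow> 'f::field)" and w :: "'e \<Rightarrow> ('d \<Rightarrow> 'f)"
  assumes "finite S" "t \<in> fs.span ((\<lambda>a. outer (u a) (w a)) ` S)"
  shows "row p t \<in> fs.span (w ` S)"
proof -
  obtain c where c: "t = (\<Sum>a\<in>S. fscale (c a) (outer (u a) (w a)))"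
    using span_rep[OF assms] by blast
  have "row p t = (\<Sum>a\<in>S. fscale (c a * u a p) (w a))"
    unfolding c row_def by (auto simp: fun_eq_iff fsum_apply mult_ac fscale_apply)
  then show ?thesis using sum_in_span by metis
qed


lemma outer_add_right: "outer u (w1 + w2) = outer u w1 + outer u w2"
  by (auto simp: fun_eq_iff outer_def algebra_simps)

lemma indep_family:
  fixes \<alpha> :: "'e \<Rightarrow> ('c \<Rightarrow> 'f::field)"
  assumes "finite J" "inj_on \<alpha> J" "fs.independent (\<alpha> ` J)"
    and "(\<Sum>j\<in>J. fscale (c j) (\<alpha> j)) = 0"
  shows "\<forall>j\<in>J. c j = 0"
proof -
  define c' where "c' v = c (the_inv_into J \<alpha> v)" for v
  have "(\<Sum>v\<in>\<alpha> ` J. fscale (c' v) v) = (\<Sum>j\<in>J. fscale (c' (\<alpha> j)) (\<alpha> j))"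
    by (rule sum.reindex[OF assms(2), unfolded comp_def])
  also have "\<dots> = (\<Sum>j\<in>J. fscale (c j) (\<alpha> j))"
    using assms(2) by (intro sum.cong) (auto simp: c'_def the_inv_into_f_f)
  finally have "(\<Sum>v\<in>\<alpha> ` J. fscale (c' v) v) = 0" using assms(4) by simp
  then have "\<forall>v\<in>\<alpha> ` J. c' v = 0"
    using fs.independentD[OF assms(3)] assms(1) by blast
  then show ?thesis using assms(2) by (auto simp: c'_def the_inv_into_f_f)
qed

lemma reduce_basis:
  fixes \<alpha> :: "'e \<Rightarrow> ('c \<Rightarrow> 'f::field)" and \<beta> :: "'e \<Rightarrow> ('d \<Rightarrow> 'f)"
  assumes "finite I"
  shows "\<exists>J \<beta>'. J \<subseteq> I \<and> (\<Sum>i\<in>I. outer (\<alpha> i) (\<beta> i)) = (\<Sum>j\<in>J. outer (\<alpha> j) (\<beta>' j))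
     \<and> inj_on \<alpha> J \<and> fs.independent (\<alpha> ` J) \<and> fs.span (\<alpha> ` J) = fs.span (\<alpha> ` I)
     \<and> (\<forall>j\<in>J. \<beta>' j \<in> fs.span (\<beta> ` I)) \<and> (\<forall>j\<in>J. \<beta> j - \<beta>' j \<in> fs.span (\<beta> ` (I - J)))"
  using assms
proof (induction "card I" arbitrary: I \<beta> rule: less_induct)
  case less
  show ?case
  proof (cases "inj_on \<alpha> I \<and> fs.independent (\<alpha> ` I)")
    case True
    then show ?thesis
      by (intro exI[of _ I] exI[of _ \<beta>]) (auto intro: fs.span_base fs.span_zero)
  next
    case False
    have "\<exists>i\<in>I. \<alpha> i \<in> fs.span (\<alpha> ` (I - {i}))"
    proof (cases "inj_on \<alpha> I")
      case False
      then obtain i i' where "i \<in> I" "i' \<in> I" "i \<noteq> i'" "\<alpha> i = \<alpha> i'"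
        unfolding inj_on_def by blast
      then have "\<alpha> i \<in> \<alpha> ` (I - {i})" by auto
      then have "\<alpha> i \<in> fs.span (\<alpha> ` (I - {i}))" by (rule fs.span_base)
      then show ?thesis using \<open>i \<in> I\<close> by blast
    next
      case True
      with False have "fs.dependent (\<alpha> ` I)" by blast
      then have "\<exists>x\<in>\<alpha> ` I. x \<in> fs.span (\<alpha> ` I - {x})" by (rule fs.dependent_def[THEN iffD1])
      then obtain x where x: "x \<in> \<alpha> ` I" "x \<in> fs.span (\<alpha> ` I - {x})" by blast
      then obtain i where i: "i \<in> I" "x = \<alpha> i" by blast
      have "\<alpha> ` I - {x} \<subseteq> \<alpha> ` (I - {i})" using i by auto
      then have "fs.span (\<alpha> ` I - {x}) \<subseteq> fs.span (\<alpha> ` (I - {i}))" by (rule fs.span_mono)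
      then have "x \<in> fs.span (\<alpha> ` (I - {i}))" using x(2) by (rule subsetD)
      then show ?thesis using i by (intro bexI[of _ i]) simp_all
    qed
    then obtain i where i: "i \<in> I" "\<alpha> i \<in> fs.span (\<alpha> ` (I - {i}))" by blast
    define I' where "I' = I - {i}"
    have fI': "finite I'" using less.prems by (simp add: I'_def)
    obtain \<gamma> where \<gamma>: "\<alpha> i = (\<Sum>k\<in>I'. fscale (\<gamma> k) (\<alpha> k))"
      using span_rep[OF fI'] i(2) unfolding I'_def by blast
    define \<beta>2 where "\<beta>2 k = \<beta> k + fscale (\<gamma> k) (\<beta> i)" for k
    have sum_eq: "(\<Sum>k\<in>I. outer (\<alpha> k) (\<beta> k)) = (\<Sum>k\<in>I'. outer (\<alpha> k) (\<beta>2 k))"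
    proof -
      have "(\<Sum>k\<in>I. outer (\<alpha> k) (\<beta> k)) = outer (\<alpha> i) (\<beta> i) + (\<Sum>k\<in>I'. outer (\<alpha> k) (\<beta> k))"
        using i(1) less.prems unfolding I'_def by (simp add: sum.remove)
      also have "outer (\<alpha> i) (\<beta> i) = (\<Sum>k\<in>I'. outer (\<alpha> k) (fscale (\<gamma> k) (\<beta> i)))"
        unfolding \<gamma> outer_sum_left outer_scale_left outer_scale_right ..
      also have "(\<Sum>k\<in>I'. outer (\<alpha> k) (fscale (\<gamma> k) (\<beta> i))) + (\<Sum>k\<in>I'. outer (\<alpha> k) (\<beta> k))
          = (\<Sum>k\<in>I'. outer (\<alpha> k) (\<beta>2 k))"
        unfolding \<beta>2_def outer_add_right sum.distrib by (rule add.commute)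
      finally show ?thesis .
    qed
    have card_less: "card I' < card I"
      using card_Diff1_less[OF less.prems i(1)] unfolding I'_def .
    obtain J \<beta>' where J: "J \<subseteq> I'" "(\<Sum>k\<in>I'. outer (\<alpha> k) (\<beta>2 k)) = (\<Sum>j\<in>J. outer (\<alpha> j) (\<beta>' j))"
      "inj_on \<alpha> J" "fs.independent (\<alpha> ` J)" "fs.span (\<alpha> ` J) = fs.span (\<alpha> ` I')"
      "\<forall>j\<in>J. \<beta>' j \<in> fs.span (\<beta>2 ` I')" "\<forall>j\<in>J. \<beta>2 j - \<beta>' j \<in> fs.span (\<beta>2 ` (I' - J))"
      using less.hyps[OF card_less fI', of \<beta>2] by blast
    have spI: "fs.span (\<alpha> ` I) = fs.span (\<alpha> ` I')"
    proof -
      have "\<alpha> ` I = insert (\<alpha> i) (\<alpha> ` I')" using i(1) unfolding I'_def by auto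
      then show ?thesis using fs.span_redundant[OF i(2)[folded I'_def]] by simp
    qed
    have iJ: "i \<notin> J" using J(1) unfolding I'_def by blast
    have b2: "\<beta>2 ` I' \<subseteq> fs.span (\<beta> ` I)"
    proof
      fix x assume "x \<in> \<beta>2 ` I'"
      then obtain k where k: "k \<in> I'" "x = \<beta>2 k" by blast
      have "k \<in> I" using k(1) unfolding I'_def by blast
      have "\<beta> k \<in> fs.span (\<beta> ` I)" using \<open>k \<in> I\<close> by (rule fs.span_base[OF imageI])
      moreover have "\<beta> i \<in> fs.span (\<beta> ` I)" using i(1) by (rule fs.span_base[OF imageI])
      ultimately show "x \<in> fs.span (\<beta> ` I)" unfolding k(2) \<beta>2_def by (intro fs.span_add fs.span_scale)
    qed
    have "i \<in> I - J" using i(1) iJ by blast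
    then have bi: "\<beta> i \<in> fs.span (\<beta> ` (I - J))" by (rule fs.span_base[OF imageI])
    have b3: "\<beta>2 ` (I' - J) \<subseteq> fs.span (\<beta> ` (I - J))"
    proof
      fix x assume "x \<in> \<beta>2 ` (I' - J)"
      then obtain k where k: "k \<in> I' - J" "x = \<beta>2 k" by blast
      have "k \<in> I - J" using k(1) unfolding I'_def by blast
      then have "\<beta> k \<in> fs.span (\<beta> ` (I - J))" by (rule fs.span_base[OF imageI])
      then show "x \<in> fs.span (\<beta> ` (I - J))" unfolding k(2) \<beta>2_def using bi by (intro fs.span_add fs.span_scale)
    qed
    show ?thesis
    proof (intro exI[of _ J] exI[of _ \<beta>'] conjI ballI)
      show "J \<subseteq> I" using J(1) unfolding I'_def by blast
      show "(\<Sum>i\<in>I. outer (\<alpha> i) (\<beta> i)) = (\<Sum>j\<in>J. outer (\<alpha> j) (\<beta>' j))" using sum_eq J(2) by simp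
      show "inj_on \<alpha> J" "fs.independent (\<alpha> ` J)" using J by auto
      show "fs.span (\<alpha> ` J) = fs.span (\<alpha> ` I)" using J(5) spI by simp
    next
      fix j assume "j \<in> J"
      show "\<beta>' j \<in> fs.span (\<beta> ` I)"
        using J(6) \<open>j \<in> J\<close> fs.span_mono[OF b2] fs.span_span by blast
    next
      fix j assume "j \<in> J"
      have e: "\<beta> j - \<beta>' j = (\<beta>2 j - \<beta>' j) - fscale (\<gamma> j) (\<beta> i)"
        by (simp add: \<beta>2_def)
      have h: "\<beta>2 j - \<beta>' j \<in> fs.span (\<beta> ` (I - J))"
        using J(7) \<open>j \<in> J\<close> fs.span_mono[OF b3] fs.span_span by blast
      show "\<beta> j - \<beta>' j \<in> fs.span (\<beta> ` (I - J))"
        unfolding e by (rule fs.span_diff[OF h fs.span_scale[OF bi]])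
    qed
  qed
qed

lemma rank_one_bound:
  fixes \<alpha> :: "'e \<Rightarrow> ('c \<Rightarrow> 'f::field)" and \<beta> :: "'e \<Rightarrow> ('d \<Rightarrow> 'f)"
  assumes "finite I" "(\<Sum>i\<in>I. outer (\<alpha> i) (\<beta> i)) = outer a b"
  shows "fs.dim (\<alpha> ` I) + fs.dim (\<beta> ` I) \<le> card I + 1"
proof -
  obtain J \<beta>' where J: "J \<subseteq> I" "(\<Sum>i\<in>I. outer (\<alpha> i) (\<beta> i)) = (\<Sum>j\<in>J. outer (\<alpha> j) (\<beta>' j))"
      "inj_on \<alpha> J" "fs.independent (\<alpha> ` J)" "fs.span (\<alpha> ` J) = fs.span (\<alpha> ` I)"
      "\<forall>j\<in>J. \<beta>' j \<in> fs.span (\<beta> ` I)" "\<forall>j\<in>J. \<beta> j - \<beta>' j \<in> fs.span (\<beta> ` (I - J))"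
    using reduce_basis[OF assms(1), of \<alpha> \<beta>] by blast
  have fJ: "finite J" using J(1) assms(1) finite_subset by blast
  have colq: "(\<Sum>j\<in>J. fscale (\<beta>' j q) (\<alpha> j)) = fscale (b q) a" for q
  proof -
    have "col q (\<Sum>j\<in>J. outer (\<alpha> j) (\<beta>' j)) = col q (outer a b)" using J(2) assms(2) by simp
    then show ?thesis by (auto simp: col_def fun_eq_iff fsum_apply fscale_apply mult_ac)
  qed
  have claim: "\<forall>j\<in>J. \<beta>' j \<in> fs.span {b}"
  proof (cases "b = 0")
    case True
    have "\<forall>j\<in>J. \<beta>' j q = 0" for q
      using indep_family[OF fJ J(3) J(4), of "\<lambda>j. \<beta>' j q"] colq[of q] True
      by (simp add: fscale_def zero_fun_def)
    then have "\<forall>j\<in>J. \<beta>' j = 0" by (auto simp: fun_eq_iff)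
    then show ?thesis using fs.span_zero by auto
  next
    case False
    then obtain q0 where q0: "b q0 \<noteq> 0" by (auto simp: fun_eq_iff)
    define \<kappa> where "\<kappa> j = \<beta>' j q0 / b q0" for j
    have a_eq: "a = (\<Sum>j\<in>J. fscale (\<kappa> j) (\<alpha> j))"
    proof -
      have "fscale (inverse (b q0)) (fscale (b q0) a) = a" using q0 by (auto simp: fun_eq_iff fscale_apply)
      also have "fscale (b q0) a = (\<Sum>j\<in>J. fscale (\<beta>' j q0) (\<alpha> j))" using colq[of q0] by simp
      finally show ?thesis unfolding \<kappa>_def
        by (auto simp: fun_eq_iff fsum_apply fscale_apply sum_distrib_left divide_inverse mult_ac)
    qed
    have zz: "\<forall>j\<in>J. \<beta>' j q - b q * \<kappa> j = 0" for q
    proof -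
      have "(\<Sum>j\<in>J. fscale (\<beta>' j q - b q * \<kappa> j) (\<alpha> j))
          = (\<Sum>j\<in>J. fscale (\<beta>' j q) (\<alpha> j)) - fscale (b q) (\<Sum>j\<in>J. fscale (\<kappa> j) (\<alpha> j))"
        by (auto simp: fun_eq_iff fsum_apply fscale_apply sum_distrib_left algebra_simps sum_subtractf)
      also have "\<dots> = 0" using colq[of q] a_eq by simp
      finally show ?thesis by (rule indep_family[OF fJ J(3) J(4)])
    qed
    have "\<beta>' j = fscale (\<kappa> j) b" if "j \<in> J" for j
    proof
      fix x show "\<beta>' j x = fscale (\<kappa> j) b x" using zz[of x] that by (simp add: fscale_apply mult.commute)
    qed
    moreover have "fscale c b \<in> fs.span {b}" for c by (rule fs.span_scale[OF fs.span_base]) simp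
    ultimately show ?thesis by simp
  qed
  have fIJ: "finite (I - J)" using assms(1) by simp
  have sub: "\<beta> ` I \<subseteq> fs.span ({b} \<union> \<beta> ` (I - J))"
  proof
    fix x assume "x \<in> \<beta> ` I"
    then obtain i where i: "i \<in> I" "x = \<beta> i" by blast
    show "x \<in> fs.span ({b} \<union> \<beta> ` (I - J))"
    proof (cases "i \<in> J")
      case True
      have "\<beta> i = (\<beta> i - \<beta>' i) + \<beta>' i" by simp
      moreover have "\<beta> i - \<beta>' i \<in> fs.span ({b} \<union> \<beta> ` (I - J))"
        using J(7) True fs.span_mono[of "\<beta> ` (I - J)" "{b} \<union> \<beta> ` (I - J)"] by blast
      moreover have "\<beta>' i \<in> fs.span ({b} \<union> \<beta> ` (I - J))"
        using claim True fs.span_mono[of "{b}" "{b} \<union> \<beta> ` (I - J)"] by blast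
      ultimately show ?thesis using i(2) fs.span_add[of "\<beta> i - \<beta>' i" _ "\<beta>' i"] by simp
    next
      case False
      then have "x \<in> {b} \<union> \<beta> ` (I - J)" using i by blast
      then show ?thesis by (rule fs.span_base)
    qed
  qed
  have "fs.dim (\<beta> ` I) \<le> fs.dim ({b} \<union> \<beta> ` (I - J))"
    using fdim_mono[OF _ sub] fIJ by simp
  also have "\<dots> \<le> card ({b} \<union> \<beta> ` (I - J))" using fdim_le_card[of "{b} \<union> \<beta> ` (I - J)"] fIJ by blast
  also have "\<dots> \<le> 1 + card (I - J)"
    using card_Un_le[of "{b}" "\<beta> ` (I - J)"] card_image_le[OF fIJ, of \<beta>] by simp
  finally have d\<beta>: "fs.dim (\<beta> ` I) \<le> 1 + card (I - J)" .
  have d\<alpha>: "fs.dim (\<alpha> ` I) = card J"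
  proof -
    have "fs.dim (\<alpha> ` I) = fs.dim (\<alpha> ` J)" using fdim_span_eq[OF J(5)] by simp
    also have "\<dots> = card (\<alpha> ` J)" using fs.dim_eq_card_independent[OF J(4)] .
    also have "\<dots> = card J" using card_image[OF J(3)] .
    finally show ?thesis .
  qed
  have "card J + card (I - J) = card I" using J(1) assms(1) fJ
    by (simp add: card_Diff_subset[OF fJ J(1)] card_mono[OF assms(1) J(1)])
  then show ?thesis using d\<alpha> d\<beta> by linarith
qed


lemma fdim_single:
  fixes x :: "'a \<Rightarrow> 'f::field"
  assumes "x \<noteq> 0" shows "fs.dim {x} = 1"
proof -
  have "fs.independent {x}" using assms by simp
  then show ?thesis using fs.dim_eq_card_independent by fastforce
qed

lemma fdim_ge1:
  fixes S :: "('a \<Rightarrow> 'f::field) set"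
  assumes "finite S" "x \<in> S" "x \<noteq> 0" shows "fs.dim S \<ge> 1"
  using fdim_subset[OF assms(1), of "{x}"] assms(2) fdim_single[OF assms(3)] by simp

definition conn :: "('e \<Rightarrow> ('a \<Rightarrow> 'f::field)) \<Rightarrow> 'e set \<Rightarrow> bool" where
  "conn f E \<longleftrightarrow> (\<forall>P. P \<subseteq> E \<longrightarrow> P \<noteq> {} \<longrightarrow> P \<noteq> E \<longrightarrow>
     (\<exists>v. v \<noteq> 0 \<and> v \<in> fs.span (f ` P) \<and> v \<in> fs.span (f ` (E - P))))"

lemma fdim_family_le:
  fixes f :: "'e \<Rightarrow> ('a \<Rightarrow> 'f::field)"
  assumes "finite \<P>" "\<forall>P\<in>\<P>. finite P"
  shows "fs.dim (f ` \<Union>\<P>) \<le> (\<Sum>P\<in>\<P>. fs.dim (f ` P))"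
  using assms
proof (induction \<P> rule: finite_induct)
  case empty then show ?case using fs.dim_eq_card_independent[OF fs.independent_empty] by simp
next
  case (insert P \<P>)
  have "f ` \<Union>(insert P \<P>) = f ` P \<union> f ` \<Union>\<P>" by auto
  then have "fs.dim (f ` \<Union>(insert P \<P>)) \<le> fs.dim (f ` P) + fs.dim (f ` \<Union>\<P>)"
    using fdim_Un_le[of "f ` P" "f ` \<Union>\<P>"] insert.prems insert.hyps by simp
  also have "\<dots> \<le> fs.dim (f ` P) + (\<Sum>P\<in>\<P>. fs.dim (f ` P))"
    using insert.IH insert.prems by simp
  finally show ?case using insert.hyps by simp
qed

lemma decomp:
  fixes f :: "'e \<Rightarrow> ('a \<Rightarrow> 'f::field)"
  assumes "finite E" "E \<noteq> {}"
  shows "\<exists>\<P>. finite \<P> \<and> (\<forall>P\<in>\<P>. P \<noteq> {} \<and> conn f P) \<and> \<Union>\<P> = E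
    \<and> (\<forall>P\<in>\<P>. \<forall>Q\<in>\<P>. P \<noteq> Q \<longrightarrow> P \<inter> Q = {}) \<and> (\<Sum>P\<in>\<P>. fs.dim (f ` P)) = fs.dim (f ` E)"
  using assms
proof (induction "card E" arbitrary: E rule: less_induct)
  case less
  show ?case
  proof (cases "conn f E")
    case True
    then show ?thesis using less.prems by (intro exI[of _ "{E}"]) auto
  next
    case False
    then have "\<exists>P. P \<subseteq> E \<and> P \<noteq> {} \<and> P \<noteq> E \<and>
        \<not> (\<exists>v. v \<noteq> 0 \<and> v \<in> fs.span (f ` P) \<and> v \<in> fs.span (f ` (E - P)))"
      unfolding conn_def by auto
    then obtain P where P: "P \<subseteq> E" "P \<noteq> {}" "P \<noteq> E"
      and nv: "\<forall>v. v \<noteq> 0 \<longrightarrow> v \<in> fs.span (f ` P) \<longrightarrow> v \<notin> fs.span (f ` (E - P))"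
      by auto
    have int0: "fs.span (f ` P) \<inter> fs.span (f ` (E - P)) = {0}"
    proof (intro equalityI subsetI)
      fix v assume "v \<in> fs.span (f ` P) \<inter> fs.span (f ` (E - P))"
      then show "v \<in> {0}" using nv by blast
    next
      fix v :: "'a \<Rightarrow> 'f" assume "v \<in> {0}"
      then show "v \<in> fs.span (f ` P) \<inter> fs.span (f ` (E - P))"
        using fs.span_zero[of "f ` P"] fs.span_zero[of "f ` (E - P)"] by simp
    qed
    have fP: "finite P" using P(1) less.prems(1) finite_subset by blast
    have fEP: "finite (E - P)" using less.prems(1) by simp
    have dimE: "fs.dim (f ` E) = fs.dim (f ` P) + fs.dim (f ` (E - P))"
    proof -
      have "f ` E = f ` P \<union> f ` (E - P)" using P(1) by auto
      then show ?thesis using fdim_Un_direct[OF _ _ int0] fP fEP by simp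
    qed
    have c1: "card P < card E" using P(1,3) less.prems(1) by (simp add: psubset_card_mono psubsetI)
    have c2: "card (E - P) < card E"
    proof -
      have "card P > 0" using fP P(2) by (simp add: card_gt_0_iff)
      moreover have "card (E - P) = card E - card P" by (rule card_Diff_subset[OF fP P(1)])
      moreover have "card P \<le> card E" by (rule card_mono[OF less.prems(1) P(1)])
      ultimately show ?thesis by linarith
    qed
    have ne2: "E - P \<noteq> {}" using P(1,3) by blast
    obtain \<P>1 where H1all: "finite \<P>1 \<and> (\<forall>Q\<in>\<P>1. Q \<noteq> {} \<and> conn f Q) \<and> \<Union>\<P>1 = P
      \<and> (\<forall>Q\<in>\<P>1. \<forall>R\<in>\<P>1. Q \<noteq> R \<longrightarrow> Q \<inter> R = {}) \<and> (\<Sum>Q\<in>\<P>1. fs.dim (f ` Q)) = fs.dim (f ` P)"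
      using less.hyps[OF c1 fP P(2)] ..
    note H1 = H1all[THEN conjunct1] H1all[THEN conjunct2, THEN conjunct1]
      H1all[THEN conjunct2, THEN conjunct2, THEN conjunct1]
      H1all[THEN conjunct2, THEN conjunct2, THEN conjunct2, THEN conjunct1]
      H1all[THEN conjunct2, THEN conjunct2, THEN conjunct2, THEN conjunct2]
    obtain \<P>2 where H2all: "finite \<P>2 \<and> (\<forall>Q\<in>\<P>2. Q \<noteq> {} \<and> conn f Q) \<and> \<Union>\<P>2 = E - P
      \<and> (\<forall>Q\<in>\<P>2. \<forall>R\<in>\<P>2. Q \<noteq> R \<longrightarrow> Q \<inter> R = {}) \<and> (\<Sum>Q\<in>\<P>2. fs.dim (f ` Q)) = fs.dim (f ` (E - P))"
      using less.hyps[OF c2 fEP ne2] ..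
    note H2 = H2all[THEN conjunct1] H2all[THEN conjunct2, THEN conjunct1]
      H2all[THEN conjunct2, THEN conjunct2, THEN conjunct1]
      H2all[THEN conjunct2, THEN conjunct2, THEN conjunct2, THEN conjunct1]
      H2all[THEN conjunct2, THEN conjunct2, THEN conjunct2, THEN conjunct2]
    have d12: "\<P>1 \<inter> \<P>2 = {}"
    proof -
      { fix Q assume Q: "Q \<in> \<P>1" "Q \<in> \<P>2"
        then have "Q \<subseteq> P" "Q \<subseteq> E - P" "Q \<noteq> {}"
          using H1(2,3) H2(3) Union_upper[of Q "\<P>1"] Union_upper[of Q "\<P>2"] by auto
        then have False by blast }
      then show ?thesis by blast
    qed
    show ?thesis
    proof (intro exI[of _ "\<P>1 \<union> \<P>2"] conjI)
      show "finite (\<P>1 \<union> \<P>2)" using H1(1) H2(1) by simp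
      show "\<forall>Q\<in>\<P>1 \<union> \<P>2. Q \<noteq> {} \<and> conn f Q" using H1(2) H2(2) by blast
      have "\<Union>(\<P>1 \<union> \<P>2) = \<Union>\<P>1 \<union> \<Union>\<P>2" by (rule Union_Un_distrib)
      also have "\<dots> = P \<union> (E - P)" using H1(3) H2(3) by simp
      also have "\<dots> = E" using P(1) by blast
      finally show "\<Union>(\<P>1 \<union> \<P>2) = E" .
      show "\<forall>Q\<in>\<P>1 \<union> \<P>2. \<forall>R\<in>\<P>1 \<union> \<P>2. Q \<noteq> R \<longrightarrow> Q \<inter> R = {}"
      proof (intro ballI impI)
        fix Q R assume QR: "Q \<in> \<P>1 \<union> \<P>2" "R \<in> \<P>1 \<union> \<P>2" "Q \<noteq> R"
        show "Q \<inter> R = {}"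
        proof (cases "Q \<in> \<P>1")
          case True
          show ?thesis
          proof (cases "R \<in> \<P>1")
            case True then show ?thesis using \<open>Q \<in> \<P>1\<close> QR(3) H1(4) by blast
          next
            case False then have "R \<in> \<P>2" using QR(2) by blast
            then have "R \<subseteq> E - P" using Union_upper[of R "\<P>2"] H2(3) by simp
            moreover have "Q \<subseteq> P" using Union_upper[OF \<open>Q \<in> \<P>1\<close>] H1(3) by simp
            ultimately show ?thesis by blast
          qed
        next
          case False
          then have Q2a: "Q \<in> \<P>2" using QR(1) by blast
          then have Q2: "Q \<in> \<P>2" "Q \<subseteq> E - P" using Union_upper[of Q "\<P>2"] H2(3) by simp_all
          show ?thesis
          proof (cases "R \<in> \<P>1")
            case True then have "R \<subseteq> P" using Union_upper[of R "\<P>1"] H1(3) by simp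
            then show ?thesis using Q2 by blast
          next
            case False then have "R \<in> \<P>2" using QR(2) by blast
            then show ?thesis using Q2(1) QR(3) H2(4) by blast
          qed
        qed
      qed
      show "(\<Sum>Q\<in>\<P>1 \<union> \<P>2. fs.dim (f ` Q)) = fs.dim (f ` E)"
        using sum.union_disjoint[OF H1(1) H2(1) d12, of "\<lambda>Q. fs.dim (f ` Q)"] H1(5) H2(5) dimE by simp
    qed
  qed
qed

lemma direct_part:
  fixes f :: "'e \<Rightarrow> ('a \<Rightarrow> 'f::field)"
  assumes "finite \<P>" "\<forall>P\<in>\<P>. finite P" "\<Union>\<P> = E"
    "\<forall>P\<in>\<P>. \<forall>Q\<in>\<P>. P \<noteq> Q \<longrightarrow> P \<inter> Q = {}" "(\<Sum>P\<in>\<P>. fs.dim (f ` P)) = fs.dim (f ` E)"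
    "Q \<in> \<P>"
  shows "fs.span (f ` Q) \<inter> fs.span (f ` (E - Q)) = {0}"
proof -
  have EQ: "E - Q = \<Union>(\<P> - {Q})"
  proof
    show "E - Q \<subseteq> \<Union>(\<P> - {Q})"
    proof
      fix x assume x: "x \<in> E - Q"
      then have "x \<in> \<Union>\<P>" using assms(3) by simp
      then obtain P where P: "P \<in> \<P>" "x \<in> P" by blast
      then have "P \<noteq> Q" using x by blast
      then show "x \<in> \<Union>(\<P> - {Q})" using P by blast
    qed
    show "\<Union>(\<P> - {Q}) \<subseteq> E - Q"
    proof
      fix x assume "x \<in> \<Union>(\<P> - {Q})"
      then obtain P where P: "P \<in> \<P>" "P \<noteq> Q" "x \<in> P" by blast
      have "P \<inter> Q = {}" using assms(4) P(1,2) assms(6) by blast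
      then have "x \<notin> Q" using P(3) by blast
      moreover have "x \<in> \<Union>\<P>" using P(1,3) by blast
      then have "x \<in> E" using assms(3) by simp
      ultimately show "x \<in> E - Q" by blast
    qed
  qed
  have "finite (\<Union>\<P>)" by (rule finite_Union[OF assms(1)]) (use assms(2) in blast)
  then have fE: "finite E" using assms(3) by simp
  have s1: "fs.dim (f ` E) = fs.dim (f ` Q) + (\<Sum>P\<in>\<P> - {Q}. fs.dim (f ` P))"
    using assms(5) sum.remove[OF assms(1,6), of "\<lambda>P. fs.dim (f ` P)"] by simp
  have s2: "(\<Sum>P\<in>\<P> - {Q}. fs.dim (f ` P)) \<ge> fs.dim (f ` (E - Q))"
    unfolding EQ using fdim_family_le[of "\<P> - {Q}" f] assms(1,2) by simp
  from s1 s2 have ge: "fs.dim (f ` E) \<ge> fs.dim (f ` Q) + fs.dim (f ` (E - Q))" by simp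
  have fQ: "finite Q" using assms(2,6) by blast
  have QE: "Q \<subseteq> E" using Union_upper[OF assms(6)] assms(3) by simp
  have uu: "f ` E = f ` Q \<union> f ` (E - Q)" using QE by blast
  have le: "fs.dim (f ` E) \<le> fs.dim (f ` Q) + fs.dim (f ` (E - Q))"
    unfolding uu using fdim_Un_le[of "f ` Q" "f ` (E - Q)"] fQ fE by simp
  show ?thesis
    using fdim_Un_direct_conv[of "f ` Q" "f ` (E - Q)"] ge le fQ fE uu by simp
qed

lemma span_Union_rep:
  fixes f :: "'e \<Rightarrow> ('a \<Rightarrow> 'f::field)"
  assumes "finite \<P>" "x \<in> fs.span (f ` \<Union>\<P>)"
  shows "\<exists>y. (\<forall>P\<in>\<P>. y P \<in> fs.span (f ` P)) \<and> x = (\<Sum>P\<in>\<P>. y P)"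
  using assms
proof (induction \<P> arbitrary: x rule: finite_induct)
  case empty
  then show ?case by simp
next
  case (insert P \<P>)
  have eq: "f ` \<Union>(insert P \<P>) = f ` P \<union> f ` \<Union>\<P>" by auto
  have "x \<in> fs.span (f ` P \<union> f ` \<Union>\<P>)" using insert.prems unfolding eq .
  then have "x \<in> {a + b | a b. a \<in> fs.span (f ` P) \<and> b \<in> fs.span (f ` \<Union>\<P>)}"
    by (simp only: fs.span_Un)
  then obtain a b where ab: "x = a + b" "a \<in> fs.span (f ` P)" "b \<in> fs.span (f ` \<Union>\<P>)"
    by blast
  obtain y where y: "\<forall>Q\<in>\<P>. y Q \<in> fs.span (f ` Q)" "b = (\<Sum>Q\<in>\<P>. y Q)"
    using insert.IH[OF ab(3)] by blast
  define y' where "y' = y(P := a)"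
  have "(\<Sum>Q\<in>insert P \<P>. y' Q) = a + (\<Sum>Q\<in>\<P>. y' Q)"
    using insert.hyps by (simp add: y'_def)
  also have "(\<Sum>Q\<in>\<P>. y' Q) = (\<Sum>Q\<in>\<P>. y Q)"
    using insert.hyps by (intro sum.cong) (auto simp: y'_def)
  finally show ?case using y ab by (intro exI[of _ y']) (auto simp: y'_def)
qed

lemma mono2:
  fixes X G H :: "('a \<Rightarrow> 'f::field) set"
  assumes "finite X" "finite G" "finite H" "H \<subseteq> fs.span G"
  shows "fs.dim (X \<union> G) + fs.dim H \<le> fs.dim (X \<union> H) + fs.dim G"
proof -
  obtain B where B: "B \<subseteq> H" "fs.independent B" "H \<subseteq> fs.span B" "card B = fs.dim H" "finite B"
    using fbasis[OF assms(3)] by blast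
  have "B \<subseteq> fs.span G" using B(1) assms(4) by blast
  then obtain C where C: "B \<subseteq> C" "C \<subseteq> fs.span G" "fs.independent C" "fs.span G \<subseteq> fs.span C"
    by (rule fs.maximal_independent_subset_extend[OF _ B(2)])
  have fC: "finite C" using fs.independent_span_bound[OF assms(2) C(3) C(2)] by blast
  have cC: "card C = fs.dim G"
    using fs.basis_card_eq_dim[OF C(2) C(4) C(3)] by simp
  have "C \<subseteq> fs.span (X \<union> H \<union> (C - B))"
  proof
    fix c assume c: "c \<in> C"
    show "c \<in> fs.span (X \<union> H \<union> (C - B))"
    proof (cases "c \<in> B")
      case True
      then have "c \<in> H" using B(1) by blast
      then have "c \<in> X \<union> H \<union> (C - B)" by blast
      then show ?thesis by (rule fs.span_base)
    next
      case False
      then have "c \<in> X \<union> H \<union> (C - B)" using c by blast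
      then show ?thesis by (rule fs.span_base)
    qed
  qed
  then have spC: "fs.span C \<subseteq> fs.span (X \<union> H \<union> (C - B))"
    by (rule fs.span_minimal[OF _ fs.subspace_span])
  have "X \<union> G \<subseteq> fs.span (X \<union> H \<union> (C - B))"
  proof -
    have "X \<subseteq> fs.span (X \<union> H \<union> (C - B))" using fs.span_superset[of "X \<union> H \<union> (C - B)"] by blast
    moreover have "G \<subseteq> fs.span (X \<union> H \<union> (C - B))"
      using fs.span_superset[of G] C(4) spC by blast
    ultimately show ?thesis by blast
  qed
  then have "fs.dim (X \<union> G) \<le> fs.dim (X \<union> H \<union> (C - B))"
    using fdim_mono[of "X \<union> H \<union> (C - B)"] assms fC by simp
  also have "\<dots> \<le> fs.dim (X \<union> H) + card (C - B)"
    using fdim_Un_card[of "X \<union> H" "C - B"] assms fC by simp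
  also have "card (C - B) = card C - card B" using card_Diff_subset[OF B(5) C(1)] .
  finally show ?thesis using cC B(4) card_mono[OF fC C(1)] by linarith
qed

lemma mono_family:
  fixes G H :: "'i \<Rightarrow> ('a \<Rightarrow> 'f::field) set"
  assumes "finite \<P>" "\<forall>P\<in>\<P>. finite (G P) \<and> finite (H P) \<and> H P \<subseteq> fs.span (G P)" "finite X"
  shows "fs.dim (X \<union> (\<Union>P\<in>\<P>. G P)) + (\<Sum>P\<in>\<P>. fs.dim (H P))
       \<le> fs.dim (X \<union> (\<Union>P\<in>\<P>. H P)) + (\<Sum>P\<in>\<P>. fs.dim (G P))"
  using assms
proof (induction \<P> arbitrary: X rule: finite_induct)
  case empty then show ?case by simp
next
  case (insert P \<P>)
  have fG: "finite (\<Union>P\<in>\<P>. G P)" "finite (\<Union>P\<in>\<P>. H P)" using insert.prems insert.hyps by auto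
  have PP: "finite (G P)" "finite (H P)" "H P \<subseteq> fs.span (G P)" using insert.prems by auto
  have e1: "X \<union> (\<Union>Q\<in>insert P \<P>. G Q) = (X \<union> (\<Union>Q\<in>\<P>. G Q)) \<union> G P" by blast
  have e2: "X \<union> (\<Union>Q\<in>insert P \<P>. H Q) = (X \<union> H P) \<union> (\<Union>Q\<in>\<P>. H Q)" by blast
  have s1: "fs.dim ((X \<union> (\<Union>Q\<in>\<P>. G Q)) \<union> G P) + fs.dim (H P)
      \<le> fs.dim ((X \<union> (\<Union>Q\<in>\<P>. G Q)) \<union> H P) + fs.dim (G P)"
    using mono2[of "X \<union> (\<Union>Q\<in>\<P>. G Q)" "G P" "H P"] PP fG insert.prems by simp
  have e3: "(X \<union> (\<Union>Q\<in>\<P>. G Q)) \<union> H P = (X \<union> H P) \<union> (\<Union>Q\<in>\<P>. G Q)" by blast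
  have s2: "fs.dim ((X \<union> H P) \<union> (\<Union>Q\<in>\<P>. G Q)) + (\<Sum>Q\<in>\<P>. fs.dim (H Q))
      \<le> fs.dim ((X \<union> H P) \<union> (\<Union>Q\<in>\<P>. H Q)) + (\<Sum>Q\<in>\<P>. fs.dim (G Q))"
    using insert.IH[of "X \<union> H P"] insert.prems PP by simp
  show ?case unfolding e1 e2 using s1 s2 insert.hyps unfolding e3 by simp
qed


lemma fdim_insert_span:
  fixes S :: "('a \<Rightarrow> 'f::field) set"
  assumes "x \<in> fs.span S" shows "fs.dim (insert x S) = fs.dim S"
  using fdim_span_eq[OF fs.span_redundant[OF assms]] .

lemma O2:
  fixes u :: "'e \<Rightarrow> ('c \<Rightarrow> 'f::field)" and w :: "'e \<Rightarrow> ('d \<Rightarrow> 'f)"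
    and y :: "'e set \<Rightarrow> ('c \<times> 'd \<Rightarrow> 'f)"
  assumes fP: "finite \<P>" and fin: "\<forall>P\<in>\<P>. finite P"
    and disj: "\<forall>P\<in>\<P>. \<forall>Q\<in>\<P>. P \<noteq> Q \<longrightarrow> P \<inter> Q = {}"
    and yin: "\<forall>P\<in>\<P>. y P \<in> fs.span ((\<lambda>a. outer (u a) (w a)) ` P)"
    and ynz: "\<forall>P\<in>\<P>. y P \<noteq> 0"
    and ysum: "(\<Sum>P\<in>\<P>. y P) = outer a b"
  shows "fs.dim (u ` \<Union>\<P>) + fs.dim (w ` \<Union>\<P>) + card \<P>
           \<le> (\<Sum>P\<in>\<P>. fs.dim (u ` P) + fs.dim (w ` P)) + 1"
proof -
  have ex: "\<forall>P\<in>\<P>. \<exists>J. \<exists>\<beta>'. J \<subseteq> P \<and> y P = (\<Sum>j\<in>J. outer (u j) (\<beta>' j)) \<and> inj_on u J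
      \<and> fs.independent (u ` J) \<and> fs.span (u ` J) = fs.span (u ` P) \<and> (\<forall>j\<in>J. \<beta>' j \<in> fs.span (w ` P))"
  proof
    fix P assume P: "P \<in> \<P>"
    have fPP: "finite P" using fin P by blast
    obtain c where c: "y P = (\<Sum>a\<in>P. fscale (c a) (outer (u a) (w a)))"
      using span_rep[OF fPP] yin P by blast
    have c2: "y P = (\<Sum>a\<in>P. outer (u a) (fscale (c a) (w a)))"
      unfolding c outer_scale_right ..
    obtain J \<beta>' where J: "J \<subseteq> P" "(\<Sum>a\<in>P. outer (u a) (fscale (c a) (w a))) = (\<Sum>j\<in>J. outer (u j) (\<beta>' j))"
      "inj_on u J" "fs.independent (u ` J)" "fs.span (u ` J) = fs.span (u ` P)"
      "\<forall>j\<in>J. \<beta>' j \<in> fs.span ((\<lambda>a. fscale (c a) (w a)) ` P)"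
      using reduce_basis[OF fPP, of u "\<lambda>a. fscale (c a) (w a)"] by blast
    have sub: "(\<lambda>a. fscale (c a) (w a)) ` P \<subseteq> fs.span (w ` P)"
    proof
      fix x assume "x \<in> (\<lambda>a. fscale (c a) (w a)) ` P"
      then obtain a where a: "a \<in> P" "x = fscale (c a) (w a)" by blast
      have "w a \<in> fs.span (w ` P)" using a(1) by (rule fs.span_base[OF imageI])
      then show "x \<in> fs.span (w ` P)" unfolding a(2) by (rule fs.span_scale)
    qed
    have sub2: "fs.span ((\<lambda>a. fscale (c a) (w a)) ` P) \<subseteq> fs.span (w ` P)"
      by (rule fs.span_minimal[OF sub fs.subspace_span])
    have "\<forall>j\<in>J. \<beta>' j \<in> fs.span (w ` P)" using J(6) sub2 by blast
    then show "\<exists>J. \<exists>\<beta>'. J \<subseteq> P \<and> y P = (\<Sum>j\<in>J. outer (u j) (\<beta>' j)) \<and> inj_on u J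
      \<and> fs.independent (u ` J) \<and> fs.span (u ` J) = fs.span (u ` P) \<and> (\<forall>j\<in>J. \<beta>' j \<in> fs.span (w ` P))"
      using J(1-5) c2 by (intro exI[of _ J] exI[of _ \<beta>']) simp
  qed
  obtain JJ where JJ: "\<forall>P\<in>\<P>. \<exists>\<beta>'. JJ P \<subseteq> P \<and> y P = (\<Sum>j\<in>JJ P. outer (u j) (\<beta>' j)) \<and> inj_on u (JJ P)
      \<and> fs.independent (u ` JJ P) \<and> fs.span (u ` JJ P) = fs.span (u ` P) \<and> (\<forall>j\<in>JJ P. \<beta>' j \<in> fs.span (w ` P))"
    using bchoice[OF ex] ..
  obtain BB where JB: "\<forall>P\<in>\<P>. JJ P \<subseteq> P \<and> y P = (\<Sum>j\<in>JJ P. outer (u j) (BB P j)) \<and> inj_on u (JJ P)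
      \<and> fs.independent (u ` JJ P) \<and> fs.span (u ` JJ P) = fs.span (u ` P) \<and> (\<forall>j\<in>JJ P. BB P j \<in> fs.span (w ` P))"
    using bchoice[OF JJ] ..
  have JBP: "JJ P \<subseteq> P \<and> y P = (\<Sum>j\<in>JJ P. outer (u j) (BB P j)) \<and> inj_on u (JJ P)
      \<and> fs.independent (u ` JJ P) \<and> fs.span (u ` JJ P) = fs.span (u ` P) \<and> (\<forall>j\<in>JJ P. BB P j \<in> fs.span (w ` P))"
    if "P \<in> \<P>" for P using JB that by (rule bspec)
  have JB1: "JJ P \<subseteq> P" if "P \<in> \<P>" for P using JBP[OF that] by (rule conjunct1)
  have JB2: "y P = (\<Sum>j\<in>JJ P. outer (u j) (BB P j))" if "P \<in> \<P>" for P
    using JBP[OF that] by (rule conjunct2[THEN conjunct1])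
  have JB3: "inj_on u (JJ P)" if "P \<in> \<P>" for P
    using JBP[OF that] by (rule conjunct2[THEN conjunct2, THEN conjunct1])
  have JB4: "fs.independent (u ` JJ P)" if "P \<in> \<P>" for P
    using JBP[OF that] by (rule conjunct2[THEN conjunct2, THEN conjunct2, THEN conjunct1])
  have JB5: "fs.span (u ` JJ P) = fs.span (u ` P)" if "P \<in> \<P>" for P
    using JBP[OF that] by (rule conjunct2[THEN conjunct2, THEN conjunct2, THEN conjunct2, THEN conjunct1])
  have JB6: "\<forall>j\<in>JJ P. BB P j \<in> fs.span (w ` P)" if "P \<in> \<P>" for P
    using JBP[OF that] by (rule conjunct2[THEN conjunct2, THEN conjunct2, THEN conjunct2, THEN conjunct2])
  define K where "K = (\<Union>P\<in>\<P>. JJ P)"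
  define part where "part k = (SOME P. P \<in> \<P> \<and> k \<in> JJ P)" for k
  define \<beta>' where "\<beta>' k = BB (part k) k" for k
  have part: "part k = P" if "P \<in> \<P>" "k \<in> JJ P" for P k
  proof -
    have uniq: "P' = P" if "P' \<in> \<P> \<and> k \<in> JJ P'" for P'
    proof (rule ccontr)
      assume "P' \<noteq> P"
      then have "P' \<inter> P = {}" using disj that \<open>P \<in> \<P>\<close> by blast
      moreover have "k \<in> P'" using that JB1 by blast
      moreover have "k \<in> P" using \<open>P \<in> \<P>\<close> \<open>k \<in> JJ P\<close> JB1 by blast
      ultimately show False by blast
    qed
    show ?thesis unfolding part_def
    proof (rule some_equality)
      show "P \<in> \<P> \<and> k \<in> JJ P" using that by blast
    next
      fix P' assume "P' \<in> \<P> \<and> k \<in> JJ P'"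
      then show "P' = P" by (rule uniq)
    qed
  qed
  have fJJ: "\<forall>P\<in>\<P>. finite (JJ P)"
  proof
    fix P assume P: "P \<in> \<P>"
    then have "finite P" using fin by blast
    then show "finite (JJ P)" using finite_subset[OF JB1[OF P]] by blast
  qed
  have djJ: "\<forall>P\<in>\<P>. \<forall>Q\<in>\<P>. P \<noteq> Q \<longrightarrow> JJ P \<inter> JJ Q = {}"
  proof (intro ballI impI)
    fix P Q assume "P \<in> \<P>" "Q \<in> \<P>" "P \<noteq> Q"
    then have "P \<inter> Q = {}" using disj by blast
    moreover have "JJ P \<subseteq> P" "JJ Q \<subseteq> Q" using JB1 \<open>P \<in> \<P>\<close> \<open>Q \<in> \<P>\<close> by blast+
    ultimately show "JJ P \<inter> JJ Q = {}" by blast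
  qed
  have fK: "finite K" unfolding K_def using fP fJJ by blast
  have sumK: "(\<Sum>k\<in>K. outer (u k) (\<beta>' k)) = outer a b"
  proof -
    have "(\<Sum>k\<in>K. outer (u k) (\<beta>' k)) = (\<Sum>P\<in>\<P>. \<Sum>k\<in>JJ P. outer (u k) (\<beta>' k))"
      unfolding K_def by (rule sum.UNION_disjoint[OF fP fJJ djJ])
    also have "\<dots> = (\<Sum>P\<in>\<P>. y P)"
    proof (rule sum.cong[OF refl])
      fix P assume P: "P \<in> \<P>"
      have "(\<Sum>k\<in>JJ P. outer (u k) (\<beta>' k)) = (\<Sum>k\<in>JJ P. outer (u k) (BB P k))"
        using part[OF P] by (intro sum.cong) (auto simp: \<beta>'_def)
      then show "(\<Sum>k\<in>JJ P. outer (u k) (\<beta>' k)) = y P" using JB2[OF P] by simp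
    qed
    finally show ?thesis using ysum by simp
  qed
  have rb: "fs.dim (u ` K) + fs.dim (\<beta>' ` K) \<le> card K + 1"
    by (rule rank_one_bound[OF fK sumK])
  have cK: "card K = (\<Sum>P\<in>\<P>. fs.dim (u ` P))"
  proof -
    have "card K = (\<Sum>P\<in>\<P>. card (JJ P))"
      unfolding K_def by (rule card_UN_disjoint[OF fP fJJ djJ])
    also have "\<dots> = (\<Sum>P\<in>\<P>. fs.dim (u ` P))"
    proof (rule sum.cong[OF refl])
      fix P assume P: "P \<in> \<P>"
      have "card (JJ P) = card (u ` JJ P)" using card_image[OF JB3[OF P]] by simp
      also have "\<dots> = fs.dim (u ` JJ P)" using fs.dim_eq_card_independent[OF JB4[OF P]] by simp
      also have "\<dots> = fs.dim (u ` P)" using fdim_span_eq[OF JB5[OF P]] .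
      finally show "card (JJ P) = fs.dim (u ` P)" .
    qed
    finally show ?thesis .
  qed
  have uK: "fs.dim (u ` K) = fs.dim (u ` \<Union>\<P>)"
  proof (rule fdim_span_eq)
    have "u ` K \<subseteq> u ` \<Union>\<P>" unfolding K_def using JB1 by blast
    moreover have "u ` \<Union>\<P> \<subseteq> fs.span (u ` K)"
    proof
      fix x assume "x \<in> u ` \<Union>\<P>"
      then obtain P a where Pa: "P \<in> \<P>" "a \<in> P" "x = u a" by blast
      have "x \<in> u ` P" using Pa by blast
      then have "x \<in> fs.span (u ` P)" by (rule fs.span_base)
      also have "fs.span (u ` P) = fs.span (u ` JJ P)" using JB5[OF Pa(1)] by simp
      also have "\<dots> \<subseteq> fs.span (u ` K)" unfolding K_def using Pa(1) by (intro fs.span_mono) blast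
      finally show "x \<in> fs.span (u ` K)" .
    qed
    ultimately show "fs.span (u ` K) = fs.span (u ` \<Union>\<P>)"
      using fs.span_eq fs.span_superset by (metis subset_trans)
  qed
  have mono: "fs.dim ({} \<union> (\<Union>P\<in>\<P>. w ` P)) + (\<Sum>P\<in>\<P>. fs.dim (BB P ` JJ P))
       \<le> fs.dim ({} \<union> (\<Union>P\<in>\<P>. BB P ` JJ P)) + (\<Sum>P\<in>\<P>. fs.dim (w ` P))"
    by (rule mono_family[OF fP]) (use fin fJJ JB6 in auto)
  have e1: "(\<Union>P\<in>\<P>. w ` P) = w ` \<Union>\<P>" by blast
  have e2: "(\<Union>P\<in>\<P>. BB P ` JJ P) = \<beta>' ` K"
  proof
    show "(\<Union>P\<in>\<P>. BB P ` JJ P) \<subseteq> \<beta>' ` K"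
    proof
      fix x assume "x \<in> (\<Union>P\<in>\<P>. BB P ` JJ P)"
      then obtain P k where Pk: "P \<in> \<P>" "k \<in> JJ P" "x = BB P k" by blast
      then have "x = \<beta>' k" using part[OF Pk(1,2)] by (simp add: \<beta>'_def)
      moreover have "k \<in> K" unfolding K_def using Pk by blast
      ultimately show "x \<in> \<beta>' ` K" by blast
    qed
    show "\<beta>' ` K \<subseteq> (\<Union>P\<in>\<P>. BB P ` JJ P)"
    proof
      fix x assume "x \<in> \<beta>' ` K"
      then obtain k where k: "k \<in> K" "x = \<beta>' k" by blast
      then obtain P where P: "P \<in> \<P>" "k \<in> JJ P" unfolding K_def by blast
      then have "x = BB P k" using part[OF P] k(2) by (simp add: \<beta>'_def)
      then show "x \<in> (\<Union>P\<in>\<P>. BB P ` JJ P)" using P by blast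
    qed
  qed
  have ge1: "fs.dim (BB P ` JJ P) \<ge> 1" if P: "P \<in> \<P>" for P
  proof -
    have "\<exists>j\<in>JJ P. BB P j \<noteq> 0"
    proof (rule ccontr)
      assume "\<not> (\<exists>j\<in>JJ P. BB P j \<noteq> 0)"
      then have "y P = (\<Sum>j\<in>JJ P. outer (u j) 0)" using JB2[OF P] by simp
      also have "\<dots> = 0" by (rule sum.neutral) (simp add: outer_eq_0_iff)
      finally show False using ynz P by blast
    qed
    then obtain j where "j \<in> JJ P" "BB P j \<noteq> 0" by blast
    moreover have "finite (BB P ` JJ P)" using fJJ P by blast
    ultimately show ?thesis using fdim_ge1[of "BB P ` JJ P" "BB P j"] by blast
  qed
  have cP: "card \<P> \<le> (\<Sum>P\<in>\<P>. fs.dim (BB P ` JJ P))"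
  proof -
    have "card \<P> = (\<Sum>P\<in>\<P>. (1::nat))" by simp
    also have "\<dots> \<le> (\<Sum>P\<in>\<P>. fs.dim (BB P ` JJ P))" by (rule sum_mono) (use ge1 in blast)
    finally show ?thesis .
  qed
  have sd: "(\<Sum>P\<in>\<P>. fs.dim (u ` P) + fs.dim (w ` P)) = (\<Sum>P\<in>\<P>. fs.dim (u ` P)) + (\<Sum>P\<in>\<P>. fs.dim (w ` P))"
    by (rule sum.distrib)
  have m2: "fs.dim (w ` \<Union>\<P>) + (\<Sum>P\<in>\<P>. fs.dim (BB P ` JJ P)) \<le> fs.dim (\<beta>' ` K) + (\<Sum>P\<in>\<P>. fs.dim (w ` P))"
    using mono unfolding e1 e2 by simp
  show ?thesis using rb cK uK m2 cP sd by linarith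
qed


lemma col_outer: "col q (outer a b) = fscale (b q) a"
  by (simp add: col_def fun_eq_iff fscale_apply mult.commute)

lemma row_outer: "row p (outer a b) = fscale (a p) b"
  by (simp add: row_def fun_eq_iff fscale_apply)

lemma fscale_inv:
  fixes x :: "'a \<Rightarrow> 'f::field"
  assumes "k \<noteq> 0" shows "fscale (inverse k) (fscale k x) = x"
  using assms by (simp add: fun_eq_iff fscale_apply)

lemma G2:
  fixes u :: "'e \<Rightarrow> ('c \<Rightarrow> 'f::field)" and w :: "'e \<Rightarrow> ('d \<Rightarrow> 'f)"
  assumes "finite E" "E \<noteq> {}" "\<forall>a\<in>E. u a \<noteq> 0" "\<forall>a\<in>E. w a \<noteq> 0"
    "conn (\<lambda>a. outer (u a) (w a)) E"
  shows "fs.dim (u ` E) + fs.dim (w ` E) \<le> fs.dim ((\<lambda>a. outer (u a) (w a)) ` E) + 1"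
  using assms
proof (induction "card E" arbitrary: E rule: less_induct)
  case less
  define f where "f = (\<lambda>a. outer (u a) (w a))"
  have fE: "finite E" using less.prems(1) .
  obtain e where e: "e \<in> E" using less.prems(2) by blast
  have ue: "u e \<noteq> 0" using less.prems(3) e by blast
  have we: "w e \<noteq> 0" using less.prems(4) e by blast
  have conn: "conn f E" using less.prems(5) unfolding f_def .
  show ?case
  proof (cases "E = {e}")
    case True
    have fe0: "f e \<noteq> 0" using ue we by (simp add: f_def outer_eq_0_iff)
    have "fs.dim (u ` E) = 1" using True fdim_single[OF ue] by simp
    moreover have "fs.dim (w ` E) = 1" using True fdim_single[OF we] by simp
    moreover have "fs.dim (f ` E) = 1" using True fdim_single[OF fe0] by simp
    ultimately show ?thesis unfolding f_def by simp
  next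
    case False
    define E' where "E' = E - {e}"
    have E'ne: "E' \<noteq> {}" using False e unfolding E'_def by blast
    have fE': "finite E'" using fE unfolding E'_def by simp
    have EE': "E = insert e E'" using e unfolding E'_def by blast
    have eE': "e \<notin> E'" unfolding E'_def by blast
    have fe: "f e \<in> fs.span (f ` E')"
    proof -
      have e1: "{e} \<subseteq> E" "{e} \<noteq> {}" "{e} \<noteq> E" using e False by blast+
      have "\<exists>v. v \<noteq> 0 \<and> v \<in> fs.span (f ` {e}) \<and> v \<in> fs.span (f ` (E - {e}))"
        using conn[unfolded conn_def, rule_format, OF e1] .
      then obtain v where v: "v \<noteq> 0 \<and> v \<in> fs.span (f ` {e}) \<and> v \<in> fs.span (f ` (E - {e}))" ..
      have "v \<in> fs.span {f e}" using v by simp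
      then obtain k where k: "v = fscale k (f e)" unfolding fs.span_singleton by blast
      have k0: "k \<noteq> 0" using v k by (auto simp: fscale_def fun_eq_iff)
      have "fscale (inverse k) v \<in> fs.span (f ` E')" using v unfolding E'_def by (intro fs.span_scale) simp
      then show ?thesis unfolding k fscale_inv[OF k0] .
    qed
    obtain \<P> where D: "finite \<P> \<and> (\<forall>P\<in>\<P>. P \<noteq> {} \<and> conn f P) \<and> \<Union>\<P> = E'
      \<and> (\<forall>P\<in>\<P>. \<forall>Q\<in>\<P>. P \<noteq> Q \<longrightarrow> P \<inter> Q = {}) \<and> (\<Sum>P\<in>\<P>. fs.dim (f ` P)) = fs.dim (f ` E')"
      using decomp[OF fE' E'ne, of f] ..
    have D1: "finite \<P>" using D by (rule conjunct1)
    have D2: "\<forall>P\<in>\<P>. P \<noteq> {} \<and> conn f P" using D by (rule conjunct2[THEN conjunct1])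
    have D3: "\<Union>\<P> = E'" using D by (rule conjunct2[THEN conjunct2, THEN conjunct1])
    have D4: "\<forall>P\<in>\<P>. \<forall>Q\<in>\<P>. P \<noteq> Q \<longrightarrow> P \<inter> Q = {}"
      using D by (rule conjunct2[THEN conjunct2, THEN conjunct2, THEN conjunct1])
    have D5: "(\<Sum>P\<in>\<P>. fs.dim (f ` P)) = fs.dim (f ` E')"
      using D by (rule conjunct2[THEN conjunct2, THEN conjunct2, THEN conjunct2])
    have PsubE': "P \<subseteq> E'" if "P \<in> \<P>" for P using Union_upper[OF that] D3 by simp
    have finP: "\<forall>P\<in>\<P>. finite P"
    proof
      fix P assume "P \<in> \<P>" then show "finite P" using finite_subset[OF PsubE' fE'] by blast
    qed
    have "f e \<in> fs.span (f ` \<Union>\<P>)" using fe D3 by simp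
    then obtain y where y: "(\<forall>P\<in>\<P>. y P \<in> fs.span (f ` P)) \<and> f e = (\<Sum>P\<in>\<P>. y P)"
      using span_Union_rep[OF D1] by blast
    have yin: "\<forall>P\<in>\<P>. y P \<in> fs.span (f ` P)" using y by (rule conjunct1)
    have ysum: "f e = (\<Sum>P\<in>\<P>. y P)" using y by (rule conjunct2)
    have ynz: "\<forall>P\<in>\<P>. y P \<noteq> 0"
    proof
      fix Q assume Q: "Q \<in> \<P>"
      show "y Q \<noteq> 0"
      proof
        assume yQ: "y Q = 0"
        have dir: "fs.span (f ` Q) \<inter> fs.span (f ` (E' - Q)) = {0}"
          by (rule direct_part[OF D1 finP D3 D4 D5 Q])
        have QE': "Q \<subseteq> E'" by (rule PsubE'[OF Q])
        have QE: "Q \<subseteq> E" "Q \<noteq> {}" "Q \<noteq> E" using QE' D2 Q EE' eE' by blast+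
        have "\<exists>v. v \<noteq> 0 \<and> v \<in> fs.span (f ` Q) \<and> v \<in> fs.span (f ` (E - Q))"
          using conn[unfolded conn_def, rule_format, OF QE] .
        then obtain v where v: "v \<noteq> 0 \<and> v \<in> fs.span (f ` Q) \<and> v \<in> fs.span (f ` (E - Q))" ..
        have sub: "fs.span (f ` P) \<subseteq> fs.span (f ` (E' - Q))" if P: "P \<in> \<P> - {Q}" for P
        proof (rule fs.span_mono)
          have "P \<inter> Q = {}" using D4 P Q by blast
          then have "P \<subseteq> E' - Q" using PsubE'[of P] P by blast
          then show "f ` P \<subseteq> f ` (E' - Q)" by blast
        qed
        have "f e = y Q + (\<Sum>P\<in>\<P> - {Q}. y P)"
          using ysum sum.remove[OF D1 Q, of y] by simp
        then have "f e = (\<Sum>P\<in>\<P> - {Q}. y P)" using yQ by simp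
        also have "\<dots> \<in> fs.span (f ` (E' - Q))"
        proof (rule fs.span_sum)
          fix P assume P: "P \<in> \<P> - {Q}"
          have "y P \<in> fs.span (f ` P)" using yin P by blast
          then show "y P \<in> fs.span (f ` (E' - Q))" using sub[OF P] by blast
        qed
        finally have feQ: "f e \<in> fs.span (f ` (E' - Q))" .
        have "E - Q = insert e (E' - Q)" using EE' QE' eE' by blast
        then have "f ` (E - Q) = insert (f e) (f ` (E' - Q))" by simp
        then have "fs.span (f ` (E - Q)) = fs.span (f ` (E' - Q))"
          using fs.span_redundant[OF feQ] by simp
        then have "v \<in> fs.span (f ` Q) \<inter> fs.span (f ` (E' - Q))" using v by simp
        then have "v = 0" using dir by blast
        then show False using v by simp
      qed
    qed
    have IH: "fs.dim (u ` P) + fs.dim (w ` P) \<le> fs.dim (f ` P) + 1" if P: "P \<in> \<P>" for P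
    proof -
      have PE: "P \<subseteq> E" using PsubE'[OF P] EE' by blast
      have "P \<subset> E" using PE PsubE'[OF P] eE' e by blast
      then have c: "card P < card E" using fE by (rule psubset_card_mono[rotated])
      have fPP: "finite P" using finP P by blast
      have ne: "P \<noteq> {}" using D2 P by blast
      have cP: "conn (\<lambda>a. outer (u a) (w a)) P" using D2 P unfolding f_def by blast
      have nu: "\<forall>a\<in>P. u a \<noteq> 0" using less.prems(3) PE by blast
      have nw: "\<forall>a\<in>P. w a \<noteq> 0" using less.prems(4) PE by blast
      show ?thesis using less.hyps[OF c fPP ne nu nw cP] unfolding f_def .
    qed
    have O: "fs.dim (u ` \<Union>\<P>) + fs.dim (w ` \<Union>\<P>) + card \<P>
        \<le> (\<Sum>P\<in>\<P>. fs.dim (u ` P) + fs.dim (w ` P)) + 1"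
    proof (rule O2[OF D1 finP D4])
      show "\<forall>P\<in>\<P>. y P \<in> fs.span ((\<lambda>a. outer (u a) (w a)) ` P)" using yin unfolding f_def .
      show "\<forall>P\<in>\<P>. y P \<noteq> 0" by (rule ynz)
      show "(\<Sum>P\<in>\<P>. y P) = outer (u e) (w e)" using ysum unfolding f_def by simp
    qed
    have S: "(\<Sum>P\<in>\<P>. fs.dim (u ` P) + fs.dim (w ` P)) \<le> (\<Sum>P\<in>\<P>. fs.dim (f ` P) + 1)"
      by (rule sum_mono) (rule IH)
    have S2: "(\<Sum>P\<in>\<P>. fs.dim (f ` P) + 1) = fs.dim (f ` E') + card \<P>"
    proof -
      have "(\<Sum>P\<in>\<P>. fs.dim (f ` P) + 1) = (\<Sum>P\<in>\<P>. fs.dim (f ` P)) + (\<Sum>P\<in>\<P>. (1::nat))"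
        by (rule sum.distrib)
      then show ?thesis using D5 by simp
    qed
    have uE: "fs.dim (u ` E) = fs.dim (u ` E')"
    proof -
      obtain q where q: "w e q \<noteq> 0" using we by (auto simp: fun_eq_iff)
      have "col q (f e) \<in> fs.span (u ` E')"
        using col_in_span[OF fE', of "f e" u w q] fe unfolding f_def by simp
      then have "fscale (inverse (w e q)) (col q (f e)) \<in> fs.span (u ` E')" by (rule fs.span_scale)
      then have "u e \<in> fs.span (u ` E')" unfolding f_def col_outer fscale_inv[OF q] .
      then show ?thesis unfolding EE' image_insert by (rule fdim_insert_span)
    qed
    have wE: "fs.dim (w ` E) = fs.dim (w ` E')"
    proof -
      obtain p where p: "u e p \<noteq> 0" using ue by (auto simp: fun_eq_iff)
      have "row p (f e) \<in> fs.span (w ` E')"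
        using row_in_span[OF fE', of "f e" u w p] fe unfolding f_def by simp
      then have "fscale (inverse (u e p)) (row p (f e)) \<in> fs.span (w ` E')" by (rule fs.span_scale)
      then have "w e \<in> fs.span (w ` E')" unfolding f_def row_outer fscale_inv[OF p] .
      then show ?thesis unfolding EE' image_insert by (rule fdim_insert_span)
    qed
    have fEq: "fs.dim (f ` E) = fs.dim (f ` E')"
      unfolding EE' image_insert by (rule fdim_insert_span[OF fe])
    have "fs.dim (u ` E) + fs.dim (w ` E) \<le> fs.dim (f ` E) + 1"
      using O[unfolded D3] S S2 uE wE fEq by linarith
    then show ?thesis unfolding f_def .
  qed
qed


definition Rm :: "nat \<Rightarrow> ((nat \<Rightarrow> 'i) \<times> 'i \<Rightarrow> 'f) \<Rightarrow> ((nat \<Rightarrow> 'i) \<Rightarrow> 'f)" where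
  "Rm m F = (\<lambda>\<iota>. F (\<iota>, \<iota> (Suc m)))"

definition Sub :: "nat \<Rightarrow> ((nat \<Rightarrow> 'i) \<times> 'i \<Rightarrow> 'f) set" where
  "Sub m = {F. \<forall>p q. F (p, q) = F (p(Suc m := q), q)}"

lemma Rm_linear: "Vector_Spaces.linear fscale fscale (Rm m :: ((nat \<Rightarrow> 'i) \<times> 'i \<Rightarrow> 'f::field) \<Rightarrow> _)"
  unfolding Vector_Spaces.linear_iff
  by (auto simp: vector_space_fscale Rm_def fscale_def fun_eq_iff)

lemma Sub_subspace: "fs.subspace (Sub m :: ((nat \<Rightarrow> 'i) \<times> 'i \<Rightarrow> 'f::field) set)"
  unfolding fs.subspace_def Sub_def by (auto simp: fscale_def)

lemma Rm_inj:
  fixes F G :: "(nat \<Rightarrow> 'i) \<times> 'i \<Rightarrow> 'f::field"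
  assumes "F \<in> Sub m" "G \<in> Sub m" "Rm m F = Rm m G"
  shows "F = G"
proof
  fix x :: "(nat \<Rightarrow> 'i) \<times> 'i"
  obtain p q where x: "x = (p, q)" by (cases x)
  have "F (p, q) = F (p(Suc m := q), q)" using assms(1) unfolding Sub_def by blast
  also have "\<dots> = Rm m F (p(Suc m := q))" by (simp add: Rm_def)
  also have "\<dots> = Rm m G (p(Suc m := q))" using assms(3) by simp
  also have "\<dots> = G (p(Suc m := q), q)" by (simp add: Rm_def)
  also have "\<dots> = G (p, q)"
  proof -
    have "G (p, q) = G (p(Suc m := q), q)" using assms(2) unfolding Sub_def by blast
    then show ?thesis by simp
  qed
  finally show "F x = G x" using x by simp
qed

lemma Rm_inj_on: "inj_on (Rm m :: ((nat \<Rightarrow> 'i) \<times> 'i \<Rightarrow> 'f::field) \<Rightarrow> _) (Sub m)"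
  using Rm_inj unfolding inj_on_def by blast

lemma Rm_span_image:
  fixes S :: "((nat \<Rightarrow> 'i) \<times> 'i \<Rightarrow> 'f::field) set"
  shows "fs.span (Rm m ` S) = Rm m ` fs.span S"
proof -
  interpret R: Vector_Spaces.linear fscale fscale "Rm m :: ((nat \<Rightarrow> 'i) \<times> 'i \<Rightarrow> 'f) \<Rightarrow> _" by (rule Rm_linear)
  show ?thesis by (rule R.span_image)
qed

lemma span_Sub:
  fixes S :: "((nat \<Rightarrow> 'i) \<times> 'i \<Rightarrow> 'f::field) set"
  assumes "S \<subseteq> Sub m" shows "fs.span S \<subseteq> Sub m"
  by (rule fs.span_minimal[OF assms Sub_subspace])

lemma Rm_dim:
  fixes S :: "((nat \<Rightarrow> 'i) \<times> 'i \<Rightarrow> 'f::field) set"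
  assumes "finite S" "S \<subseteq> Sub m"
  shows "fs.dim (Rm m ` S) = fs.dim S"
proof -
  interpret R: Vector_Spaces.linear fscale fscale "Rm m :: ((nat \<Rightarrow> 'i) \<times> 'i \<Rightarrow> 'f) \<Rightarrow> _" by (rule Rm_linear)
  obtain B where B: "B \<subseteq> S" "fs.independent B" "S \<subseteq> fs.span B" "card B = fs.dim S" "finite B"
    using fbasis[OF assms(1)] by blast
  have spB: "fs.span B = fs.span S"
    unfolding fs.span_eq using B(1) B(3) fs.span_superset[of S] by blast
  have "fs.span B \<subseteq> Sub m" using spB span_Sub[OF assms(2)] by simp
  then have inj: "inj_on (Rm m) (fs.span B)" using Rm_inj_on inj_on_subset by blast
  have ind: "fs.independent (Rm m ` B)" by (rule R.independent_injective_image[OF B(2) inj])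
  have injB: "inj_on (Rm m) B" by (rule inj_on_subset[OF inj fs.span_superset])
  have "fs.span (Rm m ` S) = fs.span (Rm m ` B)"
    unfolding Rm_span_image spB ..
  then have "fs.dim (Rm m ` S) = fs.dim (Rm m ` B)" by (rule fdim_span_eq)
  also have "\<dots> = card (Rm m ` B)" by (rule fs.dim_eq_card_independent[OF ind])
  also have "\<dots> = card B" by (rule card_image[OF injB])
  finally show ?thesis using B(4) by simp
qed

lemma conn_Rm:
  fixes g :: "'e \<Rightarrow> ((nat \<Rightarrow> 'i) \<times> 'i \<Rightarrow> 'f::field)"
  assumes "conn (\<lambda>a. Rm m (g a)) E" "\<forall>a\<in>E. g a \<in> Sub m"
  shows "conn g E"
  unfolding conn_def
proof (intro allI impI)
  fix P assume P: "P \<subseteq> E" "P \<noteq> {}" "P \<noteq> E"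
  have "\<exists>v. v \<noteq> 0 \<and> v \<in> fs.span ((\<lambda>a. Rm m (g a)) ` P) \<and> v \<in> fs.span ((\<lambda>a. Rm m (g a)) ` (E - P))"
    using assms(1)[unfolded conn_def, rule_format, OF P] .
  then obtain v where v: "v \<noteq> 0 \<and> v \<in> fs.span ((\<lambda>a. Rm m (g a)) ` P) \<and> v \<in> fs.span ((\<lambda>a. Rm m (g a)) ` (E - P))" ..
  have i1: "(\<lambda>a. Rm m (g a)) ` P = Rm m ` (g ` P)" by (simp add: image_image)
  have i2: "(\<lambda>a. Rm m (g a)) ` (E - P) = Rm m ` (g ` (E - P))" by (simp add: image_image)
  obtain v1 where v1: "v1 \<in> fs.span (g ` P)" "v = Rm m v1"
    using v unfolding i1 Rm_span_image by blast
  obtain v2 where v2: "v2 \<in> fs.span (g ` (E - P))" "v = Rm m v2"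
    using v unfolding i2 Rm_span_image by blast
  have "g ` P \<subseteq> Sub m" using assms(2) P(1) by blast
  then have s1: "v1 \<in> Sub m" using span_Sub v1(1) by blast
  have "g ` (E - P) \<subseteq> Sub m" using assms(2) by blast
  then have s2: "v2 \<in> Sub m" using span_Sub v2(1) by blast
  have "v1 = v2" using Rm_inj[OF s1 s2] v1(2) v2(2) by simp
  moreover have "v1 \<noteq> 0" using v v1(2) by (auto simp: Rm_def fun_eq_iff)
  ultimately show "\<exists>v. v \<noteq> 0 \<and> v \<in> fs.span (g ` P) \<and> v \<in> fs.span (g ` (E - P))"
    using v1(1) v2(1) by blast
qed

lemma conn_col:
  fixes u :: "'e \<Rightarrow> ('c \<Rightarrow> 'f::field)" and w :: "'e \<Rightarrow> ('d \<Rightarrow> 'f)"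
  assumes "conn (\<lambda>a. outer (u a) (w a)) E" "finite E"
  shows "conn u E"
  unfolding conn_def
proof (intro allI impI)
  fix P assume P: "P \<subseteq> E" "P \<noteq> {}" "P \<noteq> E"
  have "\<exists>v. v \<noteq> 0 \<and> v \<in> fs.span ((\<lambda>a. outer (u a) (w a)) ` P) \<and> v \<in> fs.span ((\<lambda>a. outer (u a) (w a)) ` (E - P))"
    using assms(1)[unfolded conn_def, rule_format, OF P] .
  then obtain v where v: "v \<noteq> 0 \<and> v \<in> fs.span ((\<lambda>a. outer (u a) (w a)) ` P) \<and> v \<in> fs.span ((\<lambda>a. outer (u a) (w a)) ` (E - P))" ..
  obtain x where x: "v x \<noteq> 0" using v by (auto simp: fun_eq_iff)
  obtain p q where pq: "x = (p, q)" by (cases x)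
  have fP: "finite P" using P(1) assms(2) finite_subset by blast
  have fEP: "finite (E - P)" using assms(2) by simp
  have vP: "v \<in> fs.span ((\<lambda>a. outer (u a) (w a)) ` P)" using v by (rule conjunct2[THEN conjunct1])
  have vQ: "v \<in> fs.span ((\<lambda>a. outer (u a) (w a)) ` (E - P))" using v by (rule conjunct2[THEN conjunct2])
  have c1: "col q v \<in> fs.span (u ` P)" by (rule col_in_span[OF fP vP])
  have c2: "col q v \<in> fs.span (u ` (E - P))" by (rule col_in_span[OF fEP vQ])
  have "col q v \<noteq> 0" using x pq by (auto simp: col_def fun_eq_iff)
  then show "\<exists>v. v \<noteq> 0 \<and> v \<in> fs.span (u ` P) \<and> v \<in> fs.span (u ` (E - P))"
    using c1 c2 by blast
qed

lemma ptensor_Suc: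
  "ptensor (Suc m) z = Rm m (outer (ptensor m z) (z (Suc m)))"
  by (simp add: ptensor_def Rm_def fun_eq_iff)

lemma ptensor_upd:
  "ptensor m z (p(Suc m := q)) = ptensor m z p"
  unfolding ptensor_def by (intro prod.cong) auto

lemma outer_ptensor_Sub: "outer (ptensor m z) w \<in> Sub m"
  unfolding Sub_def by (simp add: ptensor_upd)

lemma Gm:
  fixes z :: "'e \<Rightarrow> nat \<Rightarrow> 'i \<Rightarrow> 'f::field"
  assumes "finite E" "E \<noteq> {}" "\<forall>a\<in>E. ptensor m (z a) \<noteq> 0" "conn (\<lambda>a. ptensor m (z a)) E"
  shows "1 + (\<Sum>j\<in>{1..m}. fs.dim ((\<lambda>a. z a j) ` E)) \<le> fs.dim ((\<lambda>a. ptensor m (z a)) ` E) + m"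
  using assms
proof (induction m)
  case 0
  obtain e where e: "e \<in> E" using 0(2) by blast
  have one: "(\<lambda>a. ptensor 0 (z a)) ` E = {\<lambda>\<iota>. 1}" using e by (auto simp: ptensor_def)
  have "(\<lambda>\<iota>::nat \<Rightarrow> 'i. (1::'f)) \<noteq> 0" by (simp add: fun_eq_iff)
  then have "fs.dim ((\<lambda>a. ptensor 0 (z a)) ` E) = 1" unfolding one by (rule fdim_single)
  then show ?case by simp
next
  case (Suc m)
  define u where "u a = ptensor m (z a)" for a
  define w where "w a = z a (Suc m)" for a
  define f where "f a = outer (u a) (w a)" for a
  have pt: "ptensor (Suc m) (z a) = Rm m (f a)" for a
    unfolding f_def u_def w_def by (rule ptensor_Suc)
  have fSub: "\<forall>a\<in>E. f a \<in> Sub m" unfolding f_def u_def by (simp add: outer_ptensor_Sub)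
  have fnz: "f a \<noteq> 0" if "a \<in> E" for a
  proof
    assume "f a = 0"
    then have "ptensor (Suc m) (z a) = 0" unfolding pt by (simp add: Rm_def fun_eq_iff)
    then show False using Suc.prems(3) that by blast
  qed
  have uwnz: "u a \<noteq> 0 \<and> w a \<noteq> 0" if "a \<in> E" for a
    using fnz[OF that] unfolding f_def outer_eq_0_iff by simp
  have unz: "\<forall>a\<in>E. u a \<noteq> 0" using uwnz by simp
  have wnz: "\<forall>a\<in>E. w a \<noteq> 0" using uwnz by simp
  have connR: "conn (\<lambda>a. Rm m (f a)) E" using Suc.prems(4) unfolding pt .
  have connf: "conn f E" by (rule conn_Rm[OF connR fSub])
  have connf': "conn (\<lambda>a. outer (u a) (w a)) E" using connf unfolding f_def[abs_def] .
  have g2: "fs.dim (u ` E) + fs.dim (w ` E) \<le> fs.dim ((\<lambda>a. outer (u a) (w a)) ` E) + 1"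
    by (rule G2[OF Suc.prems(1,2) unz wnz connf'])
  have connu: "conn u E" by (rule conn_col[OF connf' Suc.prems(1)])
  have unz': "\<forall>a\<in>E. ptensor m (z a) \<noteq> 0" using unz unfolding u_def by simp
  have connu': "conn (\<lambda>a. ptensor m (z a)) E" using connu unfolding u_def[abs_def] .
  have IH: "1 + (\<Sum>j\<in>{1..m}. fs.dim ((\<lambda>a. z a j) ` E)) \<le> fs.dim (u ` E) + m"
    using Suc.IH[OF Suc.prems(1,2) unz' connu'] unfolding u_def[abs_def] .
  have dimR: "fs.dim ((\<lambda>a. ptensor (Suc m) (z a)) ` E) = fs.dim ((\<lambda>a. outer (u a) (w a)) ` E)"
  proof -
    have "(\<lambda>a. ptensor (Suc m) (z a)) ` E = Rm m ` (f ` E)" unfolding pt by (simp add: image_image)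
    moreover have "fs.dim (Rm m ` (f ` E)) = fs.dim (f ` E)"
      using Rm_dim[of "f ` E" m] Suc.prems(1) fSub by blast
    ultimately show ?thesis unfolding f_def[abs_def] by simp
  qed
  have wd: "fs.dim (w ` E) = fs.dim ((\<lambda>a. z a (Suc m)) ` E)" unfolding w_def[abs_def] ..
  have sumS: "(\<Sum>j\<in>{1..Suc m}. fs.dim ((\<lambda>a. z a j) ` E))
      = (\<Sum>j\<in>{1..m}. fs.dim ((\<lambda>a. z a j) ` E)) + fs.dim ((\<lambda>a. z a (Suc m)) ` E)"
    by simp
  show ?case using g2 IH dimR wd sumS by linarith
qed


lemma main_bound:
  fixes y :: "nat \<Rightarrow> nat \<Rightarrow> 'i \<Rightarrow> 'f::field"
  assumes "finite C" "C \<noteq> {}" "\<forall>a\<in>C. ptensor m (y a) \<noteq> 0" "conn (\<lambda>a. ptensor m (y a)) C" "S \<subseteq> C"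
    "int (card S) \<le> (\<Sum>j\<in>{1..m}. int (fs.dim ((\<lambda>a. y a j) ` S)) - 1)"
  shows "card S < fs.dim ((\<lambda>a. ptensor m (y a)) ` C)"
proof -
  have G: "1 + (\<Sum>j\<in>{1..m}. fs.dim ((\<lambda>a. y a j) ` C)) \<le> fs.dim ((\<lambda>a. ptensor m (y a)) ` C) + m"
    by (rule Gm[OF assms(1-4)])
  have Gi: "1 + int (\<Sum>j\<in>{1..m}. fs.dim ((\<lambda>a. y a j) ` C)) \<le> int (fs.dim ((\<lambda>a. ptensor m (y a)) ` C)) + int m"
    using G by linarith
  have mono: "fs.dim ((\<lambda>a. y a j) ` S) \<le> fs.dim ((\<lambda>a. y a j) ` C)" for j
    using fdim_subset[of "(\<lambda>a. y a j) ` C" "(\<lambda>a. y a j) ` S"] assms(1,5) by (simp add: image_mono)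
  have "(\<Sum>j\<in>{1..m}. int (fs.dim ((\<lambda>a. y a j) ` S)) - 1) \<le> (\<Sum>j\<in>{1..m}. int (fs.dim ((\<lambda>a. y a j) ` C)) - 1)"
  proof (rule sum_mono)
    fix j show "int (fs.dim ((\<lambda>a. y a j) ` S)) - 1 \<le> int (fs.dim ((\<lambda>a. y a j) ` C)) - 1"
      using mono[of j] by linarith
  qed
  also have "\<dots> = (\<Sum>j\<in>{1..m}. int (fs.dim ((\<lambda>a. y a j) ` C))) - (\<Sum>j\<in>{1..m}. (1::int))"
    by (rule sum_subtractf)
  also have "\<dots> = int (\<Sum>j\<in>{1..m}. fs.dim ((\<lambda>a. y a j) ` C)) - int m"
    by simp
  finally have "int (card S) \<le> int (\<Sum>j\<in>{1..m}. fs.dim ((\<lambda>a. y a j) ` C)) - int m"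
    using assms(6) by linarith
  then show ?thesis using Gi by linarith
qed

lemma ptensor_scale:
  fixes z :: "nat \<Rightarrow> 'i \<Rightarrow> 'f::field"
  assumes "1 \<le> m"
  shows "ptensor m (z(1 := fscale c (z 1))) = fscale c (ptensor m z)"
proof
  fix \<iota> :: "nat \<Rightarrow> 'i"
  define z' where "z' = z(1 := fscale c (z 1))"
  define P where "P = (\<Prod>j\<in>{1..m} - {1}. z j (\<iota> j))"
  have m1: "1 \<in> {1..m}" using assms by simp
  have A: "ptensor m z' \<iota> = z' 1 (\<iota> 1) * (\<Prod>j\<in>{1..m} - {1}. z' j (\<iota> j))"
    unfolding ptensor_def by (rule prod.remove[OF _ m1]) simp
  have B: "(\<Prod>j\<in>{1..m} - {1}. z' j (\<iota> j)) = P"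
    unfolding P_def z'_def by (rule prod.cong) auto
  have C: "ptensor m z \<iota> = z 1 (\<iota> 1) * P"
    unfolding ptensor_def P_def by (rule prod.remove[OF _ m1]) simp
  have D: "z' 1 (\<iota> 1) = c * z 1 (\<iota> 1)" unfolding z'_def by (simp add: fscale_apply)
  have "ptensor m z' \<iota> = c * (z 1 (\<iota> 1) * P)" unfolding A B D by (simp add: mult.assoc)
  also have "\<dots> = fscale c (ptensor m z) \<iota>" by (simp add: fscale_apply C)
  finally show "ptensor m (z(1 := fscale c (z 1))) \<iota> = fscale c (ptensor m z) \<iota>" unfolding z'_def .
qed

theorem corollary7p6:
  fixes n m :: nat and x :: "nat \<Rightarrow> nat \<Rightarrow> ('i \<Rightarrow> 'f::field)"
  assumes "n \<ge> 2" and "m \<ge> 2"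
    and prod: "\<forall>a\<in>{1..n}. ptensor m (x a) \<noteq> 0"
    and cond: "\<forall>S\<subseteq>{1..n}. 2 \<le> card S \<longrightarrow>
                 int (card S) \<le> (\<Sum>j\<in>{1..m}. int (fdim ((\<lambda>a. x a j) ` S)) - 1)"
  shows "{t. is_product_tensor m t \<and> t \<in> fspan ((\<lambda>a. ptensor m (x a)) ` {1..n})}
           = (\<Union>a\<in>{1..n}. {fscale c (ptensor m (x a)) | c. c \<noteq> 0})
       \<and> (\<forall>a\<in>{1..n}. \<forall>b\<in>{1..n}. a \<noteq> b \<longrightarrow>
           {fscale c (ptensor m (x a)) | c. c \<noteq> 0} \<inter> {fscale c (ptensor m (x b)) | c. c \<noteq> 0} = {})"
proof -
  define N where "N = {1..n::nat}"
  define X where "X a = ptensor m (x a)" for a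
  have fN: "finite N" unfolding N_def by simp
  have Xnz: "X a \<noteq> 0" if "a \<in> N" for a using prod that unfolding N_def X_def by blast
  have disj: "{fscale c (X a) | c. c \<noteq> 0} \<inter> {fscale c (X b) | c. c \<noteq> 0} = {}"
    if ab: "a \<in> N" "b \<in> N" "a \<noteq> b" for a b
  proof (rule ccontr)
    assume "{fscale c (X a) | c. c \<noteq> 0} \<inter> {fscale c (X b) | c. c \<noteq> 0} \<noteq> {}"
    then obtain c c' where cc: "c \<noteq> 0" "c' \<noteq> 0" "fscale c (X a) = fscale c' (X b)" by blast
    have Xa: "X a = fscale (c' / c) (X b)"
    proof -
      have "X a = fscale (inverse c) (fscale c (X a))" by (rule fscale_inv[OF cc(1), symmetric])
      also have "\<dots> = fscale (c' / c) (X b)" unfolding cc(3) by (simp add: fscale_def fun_eq_iff divide_inverse mult_ac)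
      finally show ?thesis .
    qed
    have XaS: "X a \<in> fs.span {X b}" unfolding Xa by (rule fs.span_scale[OF fs.span_base]) simp
    define C where "C = {a, b}"
    have fC: "finite C" "C \<noteq> {}" unfolding C_def by auto
    have nzC: "\<forall>d\<in>C. ptensor m (x d) \<noteq> 0" using Xnz ab unfolding C_def X_def by auto
    have connC: "conn (\<lambda>d. ptensor m (x d)) C"
      unfolding conn_def
    proof (intro allI impI)
      fix P assume P: "P \<subseteq> C" "P \<noteq> {}" "P \<noteq> C"
      have "P = {a} \<or> P = {b}" using P ab(3) unfolding C_def by blast
      then show "\<exists>v. v \<noteq> 0 \<and> v \<in> fs.span ((\<lambda>d. ptensor m (x d)) ` P) \<and> v \<in> fs.span ((\<lambda>d. ptensor m (x d)) ` (C - P))"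
      proof
        assume Pa: "P = {a}"
        have "C - P = {b}" using Pa ab(3) unfolding C_def by blast
        then show ?thesis using Pa XaS Xnz[OF ab(1)] fs.span_base[of "X a" "{X a}"]
          unfolding X_def by (intro exI[of _ "ptensor m (x a)"]) auto
      next
        assume Pb: "P = {b}"
        have "C - P = {a}" using Pb ab(3) unfolding C_def by blast
        then show ?thesis using Pb XaS Xnz[OF ab(1)] fs.span_base[of "X a" "{X a}"]
          unfolding X_def by (intro exI[of _ "ptensor m (x a)"]) auto
      qed
    qed
    have SN: "C \<subseteq> {1..n}" using ab unfolding C_def N_def by blast
    have cardC: "card C = 2" using ab(3) unfolding C_def by simp
    have hyp: "int (card C) \<le> (\<Sum>j\<in>{1..m}. int (fs.dim ((\<lambda>a. x a j) ` C)) - 1)"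
      using cond[rule_format, OF SN] cardC by simp
    have lt: "card C < fs.dim ((\<lambda>d. ptensor m (x d)) ` C)"
      by (rule main_bound[OF fC nzC connC order_refl hyp])
    have "(\<lambda>d. ptensor m (x d)) ` C = insert (X a) {X b}" unfolding C_def X_def by auto
    then have "fs.dim ((\<lambda>d. ptensor m (x d)) ` C) = fs.dim {X b}"
      using fdim_insert_span[OF XaS] by simp
    also have "\<dots> \<le> 1" using fdim_le_card[of "{X b}"] by simp
    finally show False using lt cardC by simp
  qed
  have sub1: "t \<in> (\<Union>a\<in>N. {fscale c (X a) | c. c \<noteq> 0})"
    if t: "is_product_tensor m t" "t \<in> fs.span (X ` N)" for t
  proof -
    obtain zt where zt: "t = ptensor m zt" "t \<noteq> 0" using t(1) unfolding is_product_tensor_def by blast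
    define good where "good S \<longleftrightarrow> S \<subseteq> N \<and> (\<exists>c. t = (\<Sum>a\<in>S. fscale (c a) (X a)))" for S
    have "good N" unfolding good_def using span_rep[OF fN t(2)] by blast
    then obtain S where S: "good S" and Smin: "\<forall>S'. good S' \<longrightarrow> card S \<le> card S'"
      using ex_has_least_nat[of good N card] by blast
    have SN: "S \<subseteq> N" using S unfolding good_def by blast
    have fS: "finite S" using finite_subset[OF SN fN] .
    obtain c where c: "t = (\<Sum>a\<in>S. fscale (c a) (X a))" using S unfolding good_def by blast
    show ?thesis
    proof (cases "card S \<ge> 2")
      case False
      then have "card S = 0 \<or> card S = 1" by linarith
      then show ?thesis
      proof
        assume "card S = 0"
        then have "S = {}" using fS by simp
        then have "t = 0" using c by simp
        then show ?thesis using zt(2) by simp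
      next
        assume "card S = 1"
        then obtain a where a: "S = {a}" using card_1_singletonE by blast
        then have ta: "t = fscale (c a) (X a)" using c by simp
        have "c a \<noteq> 0" using ta zt(2) by (auto simp: fscale_def fun_eq_iff)
        moreover have "a \<in> N" using a SN by blast
        ultimately show ?thesis using ta by blast
      qed
    next
      case True
      define y where "y = x(0 := zt)"
      define C where "C = insert 0 S"
      have S0: "0 \<notin> S" using SN unfolding N_def by auto
      have yS: "y a = x a" if "a \<in> S" for a using that S0 unfolding y_def by auto
      have Y0: "ptensor m (y 0) = t" using zt(1) unfolding y_def by simp
      have YS: "ptensor m (y a) = X a" if "a \<in> S" for a using yS[OF that] unfolding X_def by simp
      have fC: "finite C" "C \<noteq> {}" using fS unfolding C_def by auto
      have nzC: "\<forall>a\<in>C. ptensor m (y a) \<noteq> 0"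
      proof
        fix a assume "a \<in> C"
        then have "a = 0 \<or> a \<in> S" unfolding C_def by blast
        then show "ptensor m (y a) \<noteq> 0"
        proof
          assume "a = 0" then show ?thesis using Y0 zt(2) by simp
        next
          assume "a \<in> S" then show ?thesis using YS Xnz SN by auto
        qed
      qed
      have key: "\<exists>v. v \<noteq> 0 \<and> v \<in> fs.span ((\<lambda>a. ptensor m (y a)) ` Q) \<and> v \<in> fs.span ((\<lambda>a. ptensor m (y a)) ` (C - Q))"
        if Q: "Q \<subseteq> S" "Q \<noteq> {}" for Q
      proof -
        define v where "v = (\<Sum>a\<in>Q. fscale (c a) (X a))"
        have fQ: "finite Q" using finite_subset[OF Q(1) fS] .
        have split: "t = v + (\<Sum>a\<in>S - Q. fscale (c a) (X a))"
          unfolding c v_def using sum.subset_diff[OF Q(1) fS] by (simp add: add.commute)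
        have vnz: "v \<noteq> 0"
        proof
          assume "v = 0"
          then have "t = (\<Sum>a\<in>S - Q. fscale (c a) (X a))" using split by simp
          then have "good (S - Q)" unfolding good_def using SN by blast
          then have "card S \<le> card (S - Q)" using Smin by blast
          moreover have "card (S - Q) < card S"
          proof -
            have "card Q > 0" using Q(2) fQ by (simp add: card_gt_0_iff)
            moreover have "card (S - Q) = card S - card Q" by (rule card_Diff_subset[OF fQ Q(1)])
            moreover have "card Q \<le> card S" by (rule card_mono[OF fS Q(1)])
            ultimately show ?thesis by linarith
          qed
          ultimately show False by simp
        qed
        have im1: "(\<lambda>a. ptensor m (y a)) ` Q = X ` Q"
        proof (rule image_cong[OF refl])
          fix a assume "a \<in> Q"
          then have "a \<in> S" using Q(1) by blast
          then show "ptensor m (y a) = X a" by (rule YS)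
        qed
        have v1: "v \<in> fs.span ((\<lambda>a. ptensor m (y a)) ` Q)"
          unfolding im1 v_def by (rule sum_in_span)
        have v2: "v \<in> fs.span ((\<lambda>a. ptensor m (y a)) ` (C - Q))"
        proof -
          have vt: "v = t - (\<Sum>a\<in>S - Q. fscale (c a) (X a))" using split by simp
          have "t \<in> (\<lambda>a. ptensor m (y a)) ` (C - Q)"
          proof -
            have "0 \<in> C - Q" using S0 Q(1) unfolding C_def by blast
            then show ?thesis using Y0 by force
          qed
          then have tin: "t \<in> fs.span ((\<lambda>a. ptensor m (y a)) ` (C - Q))" by (rule fs.span_base)
          have "X ` (S - Q) \<subseteq> (\<lambda>a. ptensor m (y a)) ` (C - Q)"
          proof
            fix u assume "u \<in> X ` (S - Q)"
            then obtain a where a: "a \<in> S - Q" "u = X a" by blast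
            then have "a \<in> C - Q" unfolding C_def by blast
            moreover have "u = ptensor m (y a)" using a YS by simp
            ultimately show "u \<in> (\<lambda>a. ptensor m (y a)) ` (C - Q)" by blast
          qed
          then have "fs.span (X ` (S - Q)) \<subseteq> fs.span ((\<lambda>a. ptensor m (y a)) ` (C - Q))"
            by (rule fs.span_mono)
          moreover have "(\<Sum>a\<in>S - Q. fscale (c a) (X a)) \<in> fs.span (X ` (S - Q))" by (rule sum_in_span)
          ultimately have "(\<Sum>a\<in>S - Q. fscale (c a) (X a)) \<in> fs.span ((\<lambda>a. ptensor m (y a)) ` (C - Q))"
            by blast
          then show ?thesis unfolding vt using tin by (intro fs.span_diff)
        qed
        show ?thesis using vnz v1 v2 by blast
      qed
      have connC: "conn (\<lambda>a. ptensor m (y a)) C"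
        unfolding conn_def
      proof (intro allI impI)
        fix P assume P: "P \<subseteq> C" "P \<noteq> {}" "P \<noteq> C"
        show "\<exists>v. v \<noteq> 0 \<and> v \<in> fs.span ((\<lambda>a. ptensor m (y a)) ` P) \<and> v \<in> fs.span ((\<lambda>a. ptensor m (y a)) ` (C - P))"
        proof (cases "0 \<in> P")
          case True
          have Q: "C - P \<subseteq> S" "C - P \<noteq> {}" using True P unfolding C_def by blast+
          have CP: "C - (C - P) = P" using P(1) by blast
          show ?thesis using key[OF Q] unfolding CP by blast
        next
          case False
          have Q: "P \<subseteq> S" "P \<noteq> {}" using False P unfolding C_def by blast+
          show ?thesis using key[OF Q] .
        qed
      qed
      have SC: "S \<subseteq> C" unfolding C_def by blast
      have hyp0: "int (card S) \<le> (\<Sum>j\<in>{1..m}. int (fs.dim ((\<lambda>a. x a j) ` S)) - 1)"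
        using cond[rule_format, OF SN[unfolded N_def] True] .
      have imj: "(\<lambda>a. y a j) ` S = (\<lambda>a. x a j) ` S" for j using yS by (auto simp: image_def)
      have hyp: "int (card S) \<le> (\<Sum>j\<in>{1..m}. int (fs.dim ((\<lambda>a. y a j) ` S)) - 1)"
        using hyp0 unfolding imj .
      have lt: "card S < fs.dim ((\<lambda>a. ptensor m (y a)) ` C)"
        by (rule main_bound[OF fC nzC connC SC hyp])
      have imC: "(\<lambda>a. ptensor m (y a)) ` C = insert t (X ` S)"
        unfolding C_def using Y0 YS by (auto simp: image_def)
      have tS: "t \<in> fs.span (X ` S)" unfolding c by (rule sum_in_span)
      have "fs.dim ((\<lambda>a. ptensor m (y a)) ` C) = fs.dim (X ` S)"
        unfolding imC by (rule fdim_insert_span[OF tS])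
      also have "\<dots> \<le> card (X ` S)" using fdim_le_card fS by blast
      also have "\<dots> \<le> card S" using card_image_le[OF fS] .
      finally show ?thesis using lt by simp
    qed
  qed
  have sub2: "t \<in> {t. is_product_tensor m t \<and> t \<in> fs.span (X ` N)}"
    if t: "t \<in> (\<Union>a\<in>N. {fscale c (X a) | c. c \<noteq> 0})" for t
  proof -
    obtain a c where ac: "a \<in> N" "c \<noteq> 0" "t = fscale c (X a)" using t by blast
    have m1: "1 \<le> m" using assms(2) by simp
    have "t = ptensor m ((x a)(1 := fscale c (x a 1)))"
      unfolding ac(3) X_def by (rule ptensor_scale[OF m1, symmetric])
    moreover have "t \<noteq> 0" using ac Xnz by (auto simp: fscale_def fun_eq_iff)
    moreover have "t \<in> fs.span (X ` N)"
      unfolding ac(3) using ac(1) by (intro fs.span_scale fs.span_base imageI)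
    ultimately show ?thesis unfolding is_product_tensor_def by blast
  qed
  have eq: "{t. is_product_tensor m t \<and> t \<in> fs.span (X ` N)} = (\<Union>a\<in>N. {fscale c (X a) | c. c \<noteq> 0})"
  proof
    show "{t. is_product_tensor m t \<and> t \<in> fs.span (X ` N)} \<subseteq> (\<Union>a\<in>N. {fscale c (X a) | c. c \<noteq> 0})"
      using sub1 by blast
    show "(\<Union>a\<in>N. {fscale c (X a) | c. c \<noteq> 0}) \<subseteq> {t. is_product_tensor m t \<and> t \<in> fs.span (X ` N)}"
      using sub2 by blast
  qed
  show ?thesis
    using eq disj unfolding N_def X_def by blast
qed

end
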